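(* Let $n\ge2$. The group $VSPG_n$ is generated by $\{\mu_{ij},\gamma_{ij}\mid 1\le i\ne j\le n\}$ subject to the defining relations (where distinct letters denote distinct indices in $\{1,\dots,n\}$): $\mu_{ij}\mu_{ik}\mu_{jk}=\mu_{jk}\mu_{ik}\mu_{ij}$; $\mu_{ij}\mu_{ik}\gamma_{jk}=\gamma_{jk}\mu_{ik}\mu_{ij}$; $\gamma_{ij}\mu_{ik}\mu_{jk}=\mu_{jk}\mu_{ik}\gamma_{ij}$; $\mu_{ij}\gamma_{ji}=\gamma_{ij}\mu_{ji}$; $\mu_{ij}\mu_{kl}=\mu_{kl}\mu_{ij}$, $\gamma_{ij}\gamma_{kl}=\gamma_{kl}\gamma_{ij}$, $\mu_{ij}\gamma_{kl}=\gamma_{kl}\mu_{ij}$.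
   Context: Let $n\ge 2$. $VSG_n$ is the group generated by $\sigma_i,v_i,\tau_i$ ($1\le i\le n-1$) subject to: $v_i^2=1$; $\sigma_i\tau_i=\tau_i\sigma_i$; for $|i-j|=1$: $\sigma_i\sigma_j\sigma_i=\sigma_j\sigma_i\sigma_j$, $v_iv_jv_i=v_jv_iv_j$, $v_i\sigma_jv_i=v_j\sigma_iv_j$, $v_i\tau_jv_i=v_j\tau_iv_j$, $\sigma_i\sigma_j\tau_i=\tau_j\sigma_i\sigma_j$; for $|i-j|>1$: $g_ih_j=h_jg_i$ for $g_i,h_i\in\{\sigma_i,\tau_i,v_i\}$. Let $\pi:VSG_n\to S_n$ be the homomorphism with $\pi(\sigma_i)=\pi(v_i)=\pi(\tau_i)=(i,i+1)$, and $VSPG_n:=\ker\pi$. Elementary fusing strings: $\mu_{i,i+1}:=\sigma_iv_i$, $\gamma_{i,i+1}:=\tau_iv_i$. Generalized fusing strings: for $1\le i<j\le n$, $\mu_{ij}:=(v_{j-1}\cdots v_{i+1})\mu_{i,i+1}(v_{i+1}\cdots v_{j-1})$, $\gamma_{ij}:=(v_{j-1}\cdots v_{i+1})\gamma_{i,i+1}(v_{i+1}\cdots v_{j-1})$, $\mu_{ji}:=(v_{j-1}\cdots v_{i+1})v_i\mu_{i,i+1}v_i(v_{i+1}\cdots v_{j-1})$, $\gamma_{ji}:=(v_{j-1}\cdots v_{i+1})v_i\gamma_{i,i+1}v_i(v_{i+1}\cdots v_{j-1})$. *)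

theory Defs
  imports "HOL-Combinatorics.Transposition"
begin

text \<open>A word over an alphabet 'a is a list of letters; a letter (x, True) is the
generator x, (x, False) is its inverse.\<close>

type_synonym 'a word = "('a \<times> bool) list"

definition pos :: "'a \<Rightarrow> 'a \<times> bool" where "pos x = (x, True)"

definition inv_word :: "'a word \<Rightarrow> 'a word" where
  "inv_word w = rev (map (\<lambda>(x, b). (x, \<not> b)) w)"

inductive word_eq :: "('a word \<times> 'a word) set \<Rightarrow> 'a word \<Rightarrow> 'a word \<Rightarrow> bool"
  for R where
  refl: "word_eq R w w"
| sym: "word_eq R u w \<Longrightarrow> word_eq R w u"
| trans: "word_eq R u v \<Longrightarrow> word_eq R v w \<Longrightarrow> word_eq R u w"
| cancel: "word_eq R (u @ [(x, b), (x, \<not> b)] @ v) (u @ v)"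
| rel: "(l, r) \<in> R \<Longrightarrow> word_eq R (u @ l @ v) (u @ r @ v)"

definition wsubst :: "('a \<Rightarrow> 'b word) \<Rightarrow> 'a word \<Rightarrow> 'b word" where
  "wsubst f w = concat (map (\<lambda>(x, b). if b then f x else inv_word (f x)) w)"

datatype vgen = Sig nat | V nat | Tau nat

fun vidx :: "vgen \<Rightarrow> nat" where
  "vidx (Sig i) = i" | "vidx (V i) = i" | "vidx (Tau i) = i"

definition vgen_ok :: "nat \<Rightarrow> vgen \<Rightarrow> bool" where
  "vgen_ok n g \<longleftrightarrow> 1 \<le> vidx g \<and> vidx g < n"

definition adj :: "nat \<Rightarrow> nat \<Rightarrow> bool" where
  "adj i j \<longleftrightarrow> i = j + 1 \<or> j = i + 1"

definition far :: "nat \<Rightarrow> nat \<Rightarrow> bool" where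
  "far i j \<longleftrightarrow> i + 1 < j \<or> j + 1 < i"

definition vsg_rels :: "nat \<Rightarrow> (vgen word \<times> vgen word) set" where
  "vsg_rels n =
     {([pos (V i), pos (V i)], []) | i. 1 \<le> i \<and> i < n}
   \<union> {([pos (Sig i), pos (Tau i)], [pos (Tau i), pos (Sig i)]) | i. 1 \<le> i \<and> i < n}
   \<union> {([pos (Sig i), pos (Sig j), pos (Sig i)], [pos (Sig j), pos (Sig i), pos (Sig j)])
       | i j. 1 \<le> i \<and> i < n \<and> 1 \<le> j \<and> j < n \<and> adj i j}
   \<union> {([pos (V i), pos (V j), pos (V i)], [pos (V j), pos (V i), pos (V j)])
       | i j. 1 \<le> i \<and> i < n \<and> 1 \<le> j \<and> j < n \<and> adj i j}
   \<union> {([pos (V i), pos (Sig j), pos (V i)], [pos (V j), pos (Sig i), pos (V j)])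
       | i j. 1 \<le> i \<and> i < n \<and> 1 \<le> j \<and> j < n \<and> adj i j}
   \<union> {([pos (V i), pos (Tau j), pos (V i)], [pos (V j), pos (Tau i), pos (V j)])
       | i j. 1 \<le> i \<and> i < n \<and> 1 \<le> j \<and> j < n \<and> adj i j}
   \<union> {([pos (Sig i), pos (Sig j), pos (Tau i)], [pos (Tau j), pos (Sig i), pos (Sig j)])
       | i j. 1 \<le> i \<and> i < n \<and> 1 \<le> j \<and> j < n \<and> adj i j}
   \<union> {([pos (g i), pos (h j)], [pos (h j), pos (g i)])
       | g h i j. g \<in> {Sig, Tau, V} \<and> h \<in> {Sig, Tau, V}
                 \<and> 1 \<le> i \<and> i < n \<and> 1 \<le> j \<and> j < n \<and> far i j}"

text \<open>The homomorphism pi : VSG_n \<rightarrow> S_n on words (all three generators with index i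
go to the transposition (i, i+1)); permutations of {1..n} are viewed as
functions nat \<Rightarrow> nat fixing everything outside {1..n}.\<close>

definition vsg_perm :: "vgen word \<Rightarrow> nat \<Rightarrow> nat" where
  "vsg_perm w = foldr (\<lambda>(x, b) f. transpose (vidx x) (vidx x + 1) \<circ> f) w id"

datatype pgen = Mu nat nat | Gam nat nat

fun pgen_ok :: "nat \<Rightarrow> pgen \<Rightarrow> bool" where
  "pgen_ok n (Mu i j) \<longleftrightarrow> 1 \<le> i \<and> i \<le> n \<and> 1 \<le> j \<and> j \<le> n \<and> i \<noteq> j"
| "pgen_ok n (Gam i j) \<longleftrightarrow> 1 \<le> i \<and> i \<le> n \<and> 1 \<le> j \<and> j \<le> n \<and> i \<noteq> j"

definition vdown :: "nat \<Rightarrow> nat \<Rightarrow> vgen word" where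
  "vdown i j = map (\<lambda>k. pos (V k)) (rev [Suc i..<j])"

definition vup :: "nat \<Rightarrow> nat \<Rightarrow> vgen word" where
  "vup i j = map (\<lambda>k. pos (V k)) [Suc i..<j]"

fun fusing :: "pgen \<Rightarrow> vgen word" where
  "fusing (Mu a b) =
     (if a < b then vdown a b @ [pos (Sig a), pos (V a)] @ vup a b
      else vdown b a @ [pos (V b), pos (Sig b), pos (V b), pos (V b)] @ vup b a)"
| "fusing (Gam a b) =
     (if a < b then vdown a b @ [pos (Tau a), pos (V a)] @ vup a b
      else vdown b a @ [pos (V b), pos (Tau b), pos (V b), pos (V b)] @ vup b a)"

definition vspg_rels :: "nat \<Rightarrow> (pgen word \<times> pgen word) set" where
  "vspg_rels n =
     {([pos (Mu i j), pos (Mu i k), pos (Mu j k)], [pos (Mu j k), pos (Mu i k), pos (Mu i j)])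
       | i j k. i \<in> {1..n} \<and> j \<in> {1..n} \<and> k \<in> {1..n} \<and> distinct [i, j, k]}
   \<union> {([pos (Mu i j), pos (Mu i k), pos (Gam j k)], [pos (Gam j k), pos (Mu i k), pos (Mu i j)])
       | i j k. i \<in> {1..n} \<and> j \<in> {1..n} \<and> k \<in> {1..n} \<and> distinct [i, j, k]}
   \<union> {([pos (Gam i j), pos (Mu i k), pos (Mu j k)], [pos (Mu j k), pos (Mu i k), pos (Gam i j)])
       | i j k. i \<in> {1..n} \<and> j \<in> {1..n} \<and> k \<in> {1..n} \<and> distinct [i, j, k]}
   \<union> {([pos (Mu i j), pos (Gam j i)], [pos (Gam i j), pos (Mu j i)])
       | i j. i \<in> {1..n} \<and> j \<in> {1..n} \<and> i \<noteq> j}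
   \<union> {([pos (Mu i j), pos (Mu k l)], [pos (Mu k l), pos (Mu i j)])
       | i j k l. i \<in> {1..n} \<and> j \<in> {1..n} \<and> k \<in> {1..n} \<and> l \<in> {1..n} \<and> distinct [i, j, k, l]}
   \<union> {([pos (Gam i j), pos (Gam k l)], [pos (Gam k l), pos (Gam i j)])
       | i j k l. i \<in> {1..n} \<and> j \<in> {1..n} \<and> k \<in> {1..n} \<and> l \<in> {1..n} \<and> distinct [i, j, k, l]}
   \<union> {([pos (Mu i j), pos (Gam k l)], [pos (Gam k l), pos (Mu i j)])
       | i j k l. i \<in> {1..n} \<and> j \<in> {1..n} \<and> k \<in> {1..n} \<and> l \<in> {1..n} \<and> distinct [i, j, k, l]}"

end

theory Submission
  imports Defs "HOL-Combinatorics.Permutations"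
begin

lemma weq_ctx: "word_eq R a b \<Longrightarrow> word_eq R (u @ a @ v) (u @ b @ v)"
proof (induction rule: word_eq.induct)
  case (refl w) then show ?case by (rule word_eq.refl)
next
  case (sym u' w) then show ?case by (blast intro: word_eq.sym)
next
  case (trans u' v' w) then show ?case by (metis word_eq.trans)
next
  case (cancel u' x b v')
  have "word_eq R ((u @ u') @ [(x, b), (x, \<not> b)] @ (v' @ v)) ((u @ u') @ (v' @ v))"
    by (rule word_eq.cancel)
  then show ?case by simp
next
  case (rel l r u' v')
  have "word_eq R ((u @ u') @ l @ (v' @ v)) ((u @ u') @ r @ (v' @ v))"
    by (rule word_eq.rel[OF rel])
  then show ?case by simp
qed

lemma weq_app: "word_eq R a b \<Longrightarrow> word_eq R c d \<Longrightarrow> word_eq R (a @ c) (b @ d)"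
proof -
  assume 1: "word_eq R a b" and 2: "word_eq R c d"
  have "word_eq R ([] @ a @ c) ([] @ b @ c)" by (rule weq_ctx[OF 1])
  moreover have "word_eq R (b @ c @ []) (b @ d @ [])" by (rule weq_ctx[OF 2])
  ultimately show ?thesis by (auto intro: word_eq.trans)
qed

lemma weq_trans[trans]: "word_eq R a b \<Longrightarrow> word_eq R b c \<Longrightarrow> word_eq R a c"
  by (rule word_eq.trans)

lemma weq_eq_trans[trans]: "a = b \<Longrightarrow> word_eq R b c \<Longrightarrow> word_eq R a c" by simp
lemma weq_trans_eq[trans]: "word_eq R a b \<Longrightarrow> b = c \<Longrightarrow> word_eq R a c" by simp

lemma weq_refl[simp, intro]: "word_eq R a a" by (rule word_eq.refl)
lemma weq_sym: "word_eq R a b \<Longrightarrow> word_eq R b a" by (rule word_eq.sym)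

lemma weq_rel_at: "(l, r) \<in> R \<Longrightarrow> xs = u @ l @ v \<Longrightarrow> ys = u @ r @ v \<Longrightarrow> word_eq R xs ys"
  using word_eq.rel by metis

lemma weq_cancel_at: "xs = u @ [(x, b), (x, \<not> b)] @ v \<Longrightarrow> ys = u @ v \<Longrightarrow> word_eq R xs ys"
  using word_eq.cancel by metis

lemma inv_word_append[simp]: "inv_word (a @ b) = inv_word b @ inv_word a"
  by (simp add: inv_word_def)
lemma inv_word_Nil[simp]: "inv_word [] = []" by (simp add: inv_word_def)
lemma inv_word_Cons[simp]: "inv_word ((x, b) # w) = inv_word w @ [(x, \<not> b)]"
  by (simp add: inv_word_def)
lemma inv_word_inv_word[simp]: "inv_word (inv_word w) = w"
  by (induction w) auto

lemma weq_inv_r: "word_eq R (w @ inv_word w) []"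
proof (induction w)
  case Nil then show ?case by simp
next
  case (Cons a w)
  obtain x b where a: "a = (x, b)" by (cases a)
  have "word_eq R ((a # w) @ inv_word (a # w)) ([a] @ (w @ inv_word w) @ [(x, \<not> b)])"
    by (simp add: a)
  also have "word_eq R \<dots> ([a] @ [] @ [(x, \<not> b)])" by (rule weq_ctx[OF Cons])
  also have "word_eq R \<dots> []" by (rule weq_cancel_at[where u="[]" and v="[]"]) (simp_all add: a)
  finally show ?case .
qed

lemma weq_inv_l: "word_eq R (inv_word w @ w) []"
  using weq_inv_r[of R "inv_word w"] by simp

lemma weq_inv: "word_eq R a b \<Longrightarrow> word_eq R (inv_word a) (inv_word b)"
proof -
  assume h: "word_eq R a b"
  have "word_eq R (inv_word a) (inv_word a @ b @ inv_word b)"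
    using weq_app[OF weq_refl[of R "inv_word a"] weq_sym[OF weq_inv_r[of R b]]] by simp
  also have "word_eq R \<dots> (inv_word a @ a @ inv_word b)"
    by (rule weq_ctx[OF weq_sym[OF h]])
  also have "word_eq R \<dots> ([] @ inv_word b)"
    using weq_app[OF weq_inv_l[of R a] weq_refl[of R "inv_word b"]] by simp
  finally show ?thesis by simp
qed

lemma weq_conj_move: "word_eq R (x @ d) (d @ y) \<Longrightarrow> word_eq R (inv_word d @ x) (y @ inv_word d)"
proof -
  assume h: "word_eq R (x @ d) (d @ y)"
  have "word_eq R (inv_word d @ x) (inv_word d @ x @ d @ inv_word d)"
    using weq_ctx[OF weq_sym[OF weq_inv_r[of R d]], of "inv_word d @ x" "[]"] by simp
  also have "word_eq R \<dots> (inv_word d @ (d @ y) @ inv_word d)"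
    using weq_ctx[OF h, of "inv_word d" "inv_word d"] by simp
  also have "word_eq R \<dots> ((inv_word d @ d) @ y @ inv_word d)" by simp
  also have "word_eq R \<dots> ([] @ y @ inv_word d)"
    by (rule weq_app[OF weq_inv_l weq_refl])
  finally show ?thesis by simp
qed

lemma weq_conj_inv: "word_eq R (a @ b) (c @ a) \<Longrightarrow> word_eq R (a @ inv_word b) (inv_word c @ a)"
proof -
  assume h: "word_eq R (a @ b) (c @ a)"
  have h2: "word_eq R (inv_word b @ inv_word a) (inv_word a @ inv_word c)"
    using weq_inv[OF h] by simp
  have "word_eq R (a @ inv_word b) (a @ inv_word b @ inv_word a @ a)"
    using weq_ctx[OF weq_sym[OF weq_inv_l[of R a]], of "a @ inv_word b" "[]"] by simp
  also have "word_eq R \<dots> (a @ (inv_word a @ inv_word c) @ a)"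
    using weq_ctx[OF h2, of a a] by simp
  also have "word_eq R \<dots> ((a @ inv_word a) @ inv_word c @ a)" by simp
  also have "word_eq R \<dots> ([] @ inv_word c @ a)"
    by (rule weq_app[OF weq_inv_r weq_refl])
  finally show ?thesis by simp
qed

lemma wsubst_Nil[simp]: "wsubst f [] = []" by (simp add: wsubst_def)
lemma wsubst_append[simp]: "wsubst f (a @ b) = wsubst f a @ wsubst f b" by (simp add: wsubst_def)
lemma wsubst_Cons[simp]: "wsubst f ((x, b) # w) = (if b then f x else inv_word (f x)) @ wsubst f w"
  by (simp add: wsubst_def)

lemma wsubst_inv: "wsubst f (inv_word w) = inv_word (wsubst f w)"
  by (induction w) auto

lemma weq_wsubst:
  assumes "word_eq R' u1 u2"
    and "\<And>l r. (l, r) \<in> R' \<Longrightarrow> word_eq R (wsubst f l) (wsubst f r)"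
  shows "word_eq R (wsubst f u1) (wsubst f u2)"
  using assms(1)
proof (induction rule: word_eq.induct)
  case (refl w) then show ?case by simp
next
  case (sym u w) then show ?case by (blast intro: weq_sym)
next
  case (trans u v w) then show ?case by (blast intro: weq_trans)
next
  case (cancel u x b v)
  have c: "word_eq R (wsubst f [(x, b), (x, \<not> b)]) []"
    using weq_inv_r[of R "f x"] weq_inv_l[of R "f x"] by (cases b) auto
  show ?case using weq_ctx[OF c, of "wsubst f u" "wsubst f v"] by simp
next
  case (rel l r u v)
  show ?case using weq_ctx[OF assms(2)[OF rel], of "wsubst f u" "wsubst f v"] by simp
qed

declare pos_def[simp]

lemma vsg_sq: "1 \<le> i \<Longrightarrow> i < n \<Longrightarrow> word_eq (vsg_rels n) [(V i, True), (V i, True)] []"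
  by (rule weq_rel_at[where u="[]" and v="[]"]) (auto simp: vsg_rels_def)

lemma vsg_vbraid: "1 \<le> i \<Longrightarrow> i < n \<Longrightarrow> 1 \<le> j \<Longrightarrow> j < n \<Longrightarrow> adj i j \<Longrightarrow>
   word_eq (vsg_rels n) [(V i, True), (V j, True), (V i, True)] [(V j, True), (V i, True), (V j, True)]"
  by (rule weq_rel_at[where u="[]" and v="[]"]) (auto simp: vsg_rels_def)

lemma vsg_vcv: "c = Sig \<or> c = Tau \<Longrightarrow> 1 \<le> i \<Longrightarrow> i < n \<Longrightarrow> 1 \<le> j \<Longrightarrow> j < n \<Longrightarrow> adj i j \<Longrightarrow>
   word_eq (vsg_rels n) [(V i, True), (c j, True), (V i, True)] [(V j, True), (c i, True), (V j, True)]"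
  apply (rule weq_rel_at[where u="[]" and v="[]"])
  apply (auto simp: vsg_rels_def)
  done

lemma vsg_sbraid: "1 \<le> i \<Longrightarrow> i < n \<Longrightarrow> 1 \<le> j \<Longrightarrow> j < n \<Longrightarrow> adj i j \<Longrightarrow>
   word_eq (vsg_rels n) [(Sig i, True), (Sig j, True), (Sig i, True)] [(Sig j, True), (Sig i, True), (Sig j, True)]"
  by (rule weq_rel_at[where u="[]" and v="[]"]) (auto simp: vsg_rels_def)

lemma vsg_sst: "1 \<le> i \<Longrightarrow> i < n \<Longrightarrow> 1 \<le> j \<Longrightarrow> j < n \<Longrightarrow> adj i j \<Longrightarrow>
   word_eq (vsg_rels n) [(Sig i, True), (Sig j, True), (Tau i, True)] [(Tau j, True), (Sig i, True), (Sig j, True)]"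
  by (rule weq_rel_at[where u="[]" and v="[]"]) (auto simp: vsg_rels_def)

lemma vsg_st: "1 \<le> i \<Longrightarrow> i < n \<Longrightarrow>
   word_eq (vsg_rels n) [(Sig i, True), (Tau i, True)] [(Tau i, True), (Sig i, True)]"
  by (rule weq_rel_at[where u="[]" and v="[]"]) (auto simp: vsg_rels_def)

lemma vgen_cases3: "\<exists>g. g \<in> {Sig, Tau, V} \<and> x = g (vidx x)"
  by (cases x) auto

lemma vsg_far: "vgen_ok n x \<Longrightarrow> vgen_ok n y \<Longrightarrow> far (vidx x) (vidx y) \<Longrightarrow>
   word_eq (vsg_rels n) [(x, True), (y, True)] [(y, True), (x, True)]"
proof -
  assume a: "vgen_ok n x" "vgen_ok n y" "far (vidx x) (vidx y)"
  obtain g where g: "g \<in> {Sig, Tau, V}" "x = g (vidx x)" using vgen_cases3 by blast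
  obtain h where h: "h \<in> {Sig, Tau, V}" "y = h (vidx y)" using vgen_cases3 by blast
  have "([pos (g (vidx x)), pos (h (vidx y))], [pos (h (vidx y)), pos (g (vidx x))]) \<in> vsg_rels n"
    unfolding vsg_rels_def using a g(1) h(1) unfolding vgen_ok_def
    by (intro UnI2) blast
  then show ?thesis
    by (intro weq_rel_at[where u="[]" and v="[]"]) (auto simp: g(2)[symmetric] h(2)[symmetric])
qed

lemma weq_rw: "word_eq R l r \<Longrightarrow> xs = u @ l @ v \<Longrightarrow> ys = u @ r @ v \<Longrightarrow> word_eq R xs ys"
  using weq_ctx by metis

lemma weq_rw_back: "word_eq R r l \<Longrightarrow> xs = u @ l @ v \<Longrightarrow> ys = u @ r @ v \<Longrightarrow> word_eq R xs ys"
  using weq_ctx weq_sym by metis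

definition allok :: "nat \<Rightarrow> vgen word \<Rightarrow> bool" where
  "allok n w \<longleftrightarrow> (\<forall>(x, b) \<in> set w. vgen_ok n x)"

lemma vsg_far_list:
  assumes "vgen_ok n x" "\<forall>(y, b) \<in> set L. b \<and> vgen_ok n y \<and> far (vidx x) (vidx y)"
  shows "word_eq (vsg_rels n) ([(x, True)] @ L) (L @ [(x, True)])"
  using assms(2)
proof (induction L)
  case Nil then show ?case by simp
next
  case (Cons a L)
  obtain y b where a: "a = (y, b)" by (cases a)
  with Cons.prems have yb: "b" "vgen_ok n y" "far (vidx x) (vidx y)" by auto
  have "word_eq (vsg_rels n) ([(x, True)] @ a # L) ([(y, True), (x, True)] @ L)"
    using weq_ctx[OF vsg_far[OF assms(1) yb(2,3)], of "[]" L] yb(1) a by simp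
  also have "word_eq (vsg_rels n) \<dots> ([(y, True)] @ (L @ [(x, True)]))"
    using weq_ctx[OF Cons.IH, of "[(y,True)]" "[]"] Cons.prems by simp
  finally show ?case using a yb(1) by simp
qed

lemma vsg_vinv: "1 \<le> i \<Longrightarrow> i < n \<Longrightarrow> word_eq (vsg_rels n) [(V i, False)] [(V i, True)]"
proof -
  assume i: "1 \<le> i" "i < n"
  have "word_eq (vsg_rels n) [(V i, False)] ([(V i, False)] @ [(V i, True), (V i, True)])"
    using weq_ctx[OF weq_sym[OF vsg_sq[OF i]], of "[(V i, False)]" "[]"] by simp
  also have "word_eq (vsg_rels n) \<dots> [(V i, True)]"
    by (rule weq_cancel_at[where u="[]" and v="[(V i, True)]" and b=False]) simp_all
  finally show ?thesis .
qed

abbreviation tr :: "nat \<Rightarrow> nat \<Rightarrow> nat" where "tr k \<equiv> transpose k (Suc k)"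

lemma vsg_perm_Nil[simp]: "vsg_perm [] = id" by (simp add: vsg_perm_def)
lemma vsg_perm_Cons[simp]: "vsg_perm ((x, b) # w) = tr (vidx x) \<circ> vsg_perm w"
  by (simp add: vsg_perm_def)
lemma vsg_perm_append[simp]: "vsg_perm (a @ b) = vsg_perm a \<circ> vsg_perm b"
  by (induction a) (auto simp: comp_assoc)

lemma vsg_perm_rev: "vsg_perm w \<circ> vsg_perm (rev w) = id"
proof (induction w)
  case Nil then show ?case by simp
next
  case (Cons a w)
  obtain x b where a: "a = (x, b)" by (cases a)
  have "\<And>z. vsg_perm w (vsg_perm (rev w) z) = z" using Cons by (simp add: fun_eq_iff)
  then show ?case by (simp add: a fun_eq_iff)
qed

lemma vsg_perm_flip: "vsg_perm (map (\<lambda>(x, b). (x, \<not> b)) w) = vsg_perm w"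
  by (induction w) auto

lemma vsg_perm_inv: "vsg_perm w \<circ> vsg_perm (inv_word w) = id"
  using vsg_perm_rev[of w] unfolding inv_word_def
  by (metis rev_map vsg_perm_flip)

lemma vsg_perm_inv_id: "vsg_perm w = id \<Longrightarrow> vsg_perm (inv_word w) = id"
  using vsg_perm_inv[of w] by simp

lemma vsg_perm_rev_pt: "vsg_perm w (vsg_perm (rev w) z) = z"
  using vsg_perm_rev[of w] by (simp add: fun_eq_iff)

lemma vup_rev: "vup a b = rev (vdown a b)"
  by (simp add: vup_def vdown_def rev_map)

lemma vsg_perm_conj: "vsg_perm (d @ c @ rev d) = id" if "vsg_perm c = id"
  using that vsg_perm_rev[of d] by simp

lemma vsg_perm_fusing[simp]: "vsg_perm (fusing g) = id"
proof (cases g)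
  case (Mu a b)
  then show ?thesis by (cases "a < b") (auto simp: vup_rev fun_eq_iff vsg_perm_rev_pt)
next
  case (Gam a b)
  then show ?thesis by (cases "a < b") (auto simp: vup_rev fun_eq_iff vsg_perm_rev_pt)
qed

lemma part1: "vsg_perm (wsubst fusing u) = id"
proof (induction u)
  case Nil then show ?case by simp
next
  case (Cons a u)
  obtain x b where a: "a = (x, b)" by (cases a)
  then show ?case using Cons vsg_perm_inv_id[OF vsg_perm_fusing[of x]] by simp
qed

abbreviation vl :: "nat \<Rightarrow> vgen \<times> bool" where "vl i \<equiv> (V i, True)"
abbreviation cl :: "(nat \<Rightarrow> vgen) \<Rightarrow> nat \<Rightarrow> vgen \<times> bool" where "cl c i \<equiv> (c i, True)"

abbreviation (input) RR where "RR n \<equiv> vsg_rels n"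

lemma adj_Suc: "adj i (Suc i)" "adj (Suc i) i" by (auto simp: adj_def)

context
  fixes n :: nat and c :: "nat \<Rightarrow> vgen"
  assumes c: "c = Sig \<or> c = Tau"
begin

lemma core_F1:
  assumes "1 \<le> p" "Suc p < n"
  shows "word_eq (RR n) [vl p, cl c (Suc p), vl (Suc p), vl p] [vl (Suc p), cl c p, vl p, vl (Suc p)]"
proof -
  let ?a = "Suc p"
  have "word_eq (RR n) [vl p, cl c ?a, vl ?a, vl p] [vl p, cl c ?a, vl p, vl p, vl ?a, vl p]"
    by (rule weq_rw_back[OF vsg_sq, where u="[vl p, cl c ?a]" and v="[vl ?a, vl p]"]) (use assms in simp_all)
  also have "word_eq (RR n) \<dots> [vl ?a, cl c p, vl ?a, vl p, vl ?a, vl p]"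
    by (rule weq_rw[OF vsg_vcv[OF c, of p n ?a], where u="[]" and v="[vl p, vl ?a, vl p]"]) (use assms in \<open>simp_all add: adj_Suc\<close>)
  also have "word_eq (RR n) \<dots> [vl ?a, cl c p, vl ?a, vl ?a, vl p, vl ?a]"
    by (rule weq_rw[OF vsg_vbraid[of p n ?a], where u="[vl ?a, cl c p, vl ?a]" and v="[]"]) (use assms in \<open>simp_all add: adj_Suc\<close>)
  also have "word_eq (RR n) \<dots> [vl ?a, cl c p, vl p, vl ?a]"
    by (rule weq_rw[OF vsg_sq, where u="[vl ?a, cl c p]" and v="[vl p, vl ?a]"]) (use assms in simp_all)
  finally show ?thesis .
qed

lemma core_F2:
  assumes "1 \<le> a" "Suc a < n"
  shows "word_eq (RR n) [vl a, vl (Suc a), cl c a, vl a, vl (Suc a), vl a] [cl c (Suc a), vl (Suc a)]"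
proof -
  let ?q = "Suc a"
  have "word_eq (RR n) [vl a, vl ?q, cl c a, vl a, vl ?q, vl a] [vl a, vl a, cl c ?q, vl ?q, vl a, vl a]"
    by (rule weq_rw_back[OF core_F1, where u="[vl a]" and v="[vl a]"]) (use assms in simp_all)
  also have "word_eq (RR n) \<dots> [cl c ?q, vl ?q, vl a, vl a]"
    by (rule weq_rw[OF vsg_sq, where u="[]" and v="[cl c ?q, vl ?q, vl a, vl a]"]) (use assms in simp_all)
  also have "word_eq (RR n) \<dots> [cl c ?q, vl ?q]"
    by (rule weq_rw[OF vsg_sq, where u="[cl c ?q, vl ?q]" and v="[]"]) (use assms in simp_all)
  finally show ?thesis .
qed

text \<open>Reverse core, simplified to [v a, c a].\<close>
lemma core_R1:
  assumes "1 \<le> p" "Suc p < n"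
  shows "word_eq (RR n) [vl p, vl (Suc p), cl c (Suc p), vl p] [vl (Suc p), vl p, cl c p, vl (Suc p)]"
proof -
  let ?a = "Suc p"
  have "word_eq (RR n) [vl p, vl ?a, cl c ?a, vl p] [vl p, vl ?a, vl p, vl p, cl c ?a, vl p]"
    by (rule weq_rw_back[OF vsg_sq, where u="[vl p, vl ?a]" and v="[cl c ?a, vl p]"]) (use assms in simp_all)
  also have "word_eq (RR n) \<dots> [vl p, vl ?a, vl p, vl ?a, cl c p, vl ?a]"
    by (rule weq_rw[OF vsg_vcv[OF c, of p n ?a], where u="[vl p, vl ?a, vl p]" and v="[]"]) (use assms in \<open>simp_all add: adj_Suc\<close>)
  also have "word_eq (RR n) \<dots> [vl ?a, vl p, vl ?a, vl ?a, cl c p, vl ?a]"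
    by (rule weq_rw[OF vsg_vbraid[of p n ?a], where u="[]" and v="[vl ?a, cl c p, vl ?a]"]) (use assms in \<open>simp_all add: adj_Suc\<close>)
  also have "word_eq (RR n) \<dots> [vl ?a, vl p, cl c p, vl ?a]"
    by (rule weq_rw[OF vsg_sq, where u="[vl ?a, vl p]" and v="[cl c p, vl ?a]"]) (use assms in simp_all)
  finally show ?thesis .
qed

lemma core_R2:
  assumes "1 \<le> a" "Suc a < n"
  shows "word_eq (RR n) [vl a, vl (Suc a), vl a, cl c a, vl (Suc a), vl a] [vl (Suc a), cl c (Suc a)]"
proof -
  let ?q = "Suc a"
  have "word_eq (RR n) [vl a, vl ?q, vl a, cl c a, vl ?q, vl a] [vl a, vl a, vl ?q, cl c ?q, vl a, vl a]"
    by (rule weq_rw_back[OF core_R1, where u="[vl a]" and v="[vl a]"]) (use assms in simp_all)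
  also have "word_eq (RR n) \<dots> [vl ?q, cl c ?q, vl a, vl a]"
    by (rule weq_rw[OF vsg_sq, where u="[]" and v="[vl ?q, cl c ?q, vl a, vl a]"]) (use assms in simp_all)
  also have "word_eq (RR n) \<dots> [vl ?q, cl c ?q]"
    by (rule weq_rw[OF vsg_sq, where u="[vl ?q, cl c ?q]" and v="[]"]) (use assms in simp_all)
  finally show ?thesis .
qed

end

definition vw :: "nat list \<Rightarrow> vgen word" where "vw ks = map vl ks"

lemma vw_simps[simp]: "vw [] = []" "vw (k # ks) = vl k # vw ks" "vw (a @ b) = vw a @ vw b"
  by (simp_all add: vw_def)

lemma vdown_vw: "vdown a b = vw (rev [Suc a..<b])" by (simp add: vdown_def vw_def)
lemma vup_vw: "vup a b = vw [Suc a..<b]" by (simp add: vup_def vw_def)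

lemma vdown_empty: "b \<le> Suc a \<Longrightarrow> vdown a b = []" by (simp add: vdown_def)
lemma vup_empty: "b \<le> Suc a \<Longrightarrow> vup a b = []" by (simp add: vup_def)
lemma vdown_Suc: "a < b \<Longrightarrow> vdown a (Suc b) = vl b # vdown a b" by (simp add: vdown_def)
lemma vup_Suc: "a < b \<Longrightarrow> vup a (Suc b) = vup a b @ [vl b]" by (simp add: vup_def)
lemma vdown_low: "Suc a < b \<Longrightarrow> vdown a b = vdown (Suc a) b @ [vl (Suc a)]"
  by (simp add: vdown_def upt_rec)
lemma vup_low: "Suc a < b \<Longrightarrow> vup a b = vl (Suc a) # vup (Suc a) b"
  by (simp add: vup_def upt_rec)
lemma vdown_mid: "Suc a \<le> k \<Longrightarrow> Suc (Suc k) \<le> b \<Longrightarrow>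
   vdown a b = vdown (Suc k) b @ [vl (Suc k), vl k] @ vdown a k"
proof -
  assume h: "Suc a \<le> k" "Suc (Suc k) \<le> b"
  have 1: "[Suc a..<b] = [Suc a..<k] @ [k..<b]" using upt_add_eq_append[of "Suc a" k "b - k"] h by simp
  have 2: "[k..<b] = k # Suc k # [Suc (Suc k)..<b]" using h by (simp add: upt_conv_Cons)
  have "[Suc a..<b] = [Suc a..<k] @ [k, Suc k] @ [Suc (Suc k)..<b]"
    using 1 2 by simp
  then show ?thesis by (simp add: vdown_def)
qed

lemma vdown_letters: "(y, bb) \<in> set (vdown a b) \<Longrightarrow> bb \<and> (\<exists>j. y = V j \<and> a < j \<and> j < b)"
  by (auto simp: vdown_def)
lemma vup_letters: "(y, bb) \<in> set (vup a b) \<Longrightarrow> bb \<and> (\<exists>j. y = V j \<and> a < j \<and> j < b)"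
  by (auto simp: vup_def)

lemma inv_vw: "\<forall>k\<in>set ks. 1 \<le> k \<and> k < n \<Longrightarrow> word_eq (RR n) (inv_word (vw ks)) (vw (rev ks))"
proof (induction ks)
  case Nil then show ?case by simp
next
  case (Cons k ks)
  then have "word_eq (RR n) (inv_word (vw ks) @ [(V k, False)]) (vw (rev ks) @ [vl k])"
    by (intro weq_app vsg_vinv) auto
  then show ?case by simp
qed

lemma vw_sq: "1 \<le> k \<Longrightarrow> k < n \<Longrightarrow> xs = u @ [vl k, vl k] @ v \<Longrightarrow> ys = u @ v \<Longrightarrow> word_eq (RR n) xs ys"
  using weq_rw[OF vsg_sq, of k n xs u v] by simp

lemma far_list_gen:
  assumes "vgen_ok n x" "\<forall>(y, b) \<in> set L. b \<and> vgen_ok n y \<and> far (vidx x) (vidx y)"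
    and "xs = u @ [(x, True)] @ L @ v" "ys = u @ L @ [(x, True)] @ v"
  shows "word_eq (RR n) xs ys"
  using weq_ctx[OF vsg_far_list[OF assms(1,2)], of u v] assms(3,4) by simp

lemma far_list_gen':
  assumes "vgen_ok n x" "\<forall>(y, b) \<in> set L. b \<and> vgen_ok n y \<and> far (vidx x) (vidx y)"
    and "xs = u @ L @ [(x, True)] @ v" "ys = u @ [(x, True)] @ L @ v"
  shows "word_eq (RR n) xs ys"
  using weq_sym[OF far_list_gen[OF assms(1,2) assms(4,3)]] .

lemma vdown_commute:
  assumes "1 \<le> a" "Suc a \<le> k" "Suc (Suc k) \<le> b" "b \<le> n"
  shows "word_eq (RR n) ([vl k] @ vdown a b) (vdown a b @ [vl (Suc k)])"
proof -
  have "[vl k] @ vdown a b = [] @ [vl k] @ vdown (Suc k) b @ ([vl (Suc k), vl k] @ vdown a k)"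
    using vdown_mid[OF assms(2,3)] by simp
  also have "word_eq (RR n) \<dots> ([] @ vdown (Suc k) b @ [vl k] @ ([vl (Suc k), vl k] @ vdown a k))"
    by (rule far_list_gen[where x="V k" and L="vdown (Suc k) b" and u="[]" and v="[vl (Suc k), vl k] @ vdown a k"])
       (use assms in \<open>auto simp: vgen_ok_def far_def dest!: vdown_letters\<close>)
  also have "word_eq (RR n) \<dots> (vdown (Suc k) b @ [vl (Suc k), vl k, vl (Suc k)] @ vdown a k)"
    by (rule weq_rw[OF vsg_vbraid[of k n "Suc k"], where u="vdown (Suc k) b"]) (use assms in \<open>simp_all add: adj_Suc\<close>)
  also have "word_eq (RR n) \<dots> ((vdown (Suc k) b @ [vl (Suc k), vl k]) @ vdown a k @ [vl (Suc k)] @ [])"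
    by (rule far_list_gen[where x="V (Suc k)" and L="vdown a k" and u="vdown (Suc k) b @ [vl (Suc k), vl k]" and v="[]"])
       (use assms in \<open>auto simp: vgen_ok_def far_def dest!: vdown_letters\<close>)
  also have "\<dots> = vdown a b @ [vl (Suc k)]"
    using vdown_mid[OF assms(2,3)] by simp
  finally show ?thesis .
qed

lemma vup_commute:
  assumes "1 \<le> a" "Suc a \<le> k" "Suc (Suc k) \<le> b" "b \<le> n"
  shows "word_eq (RR n) (vup a b @ [vl k]) ([vl (Suc k)] @ vup a b)"
proof -
  have ok: "\<forall>j\<in>set (rev [Suc a..<b]). 1 \<le> j \<and> j < n" using assms by auto
  have iv: "word_eq (RR n) (inv_word (vdown a b)) (vup a b)"
    using inv_vw[OF ok] by (simp add: vdown_vw vup_vw)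
  have "word_eq (RR n) (vup a b @ [vl k]) (inv_word (vdown a b) @ [vl k])"
    by (rule weq_app[OF weq_sym[OF iv] weq_refl])
  also have "word_eq (RR n) \<dots> ([vl (Suc k)] @ inv_word (vdown a b))"
    by (rule weq_conj_move[OF vdown_commute[OF assms]])
  also have "word_eq (RR n) \<dots> ([vl (Suc k)] @ vup a b)"
    by (rule weq_app[OF weq_refl iv])
  finally show ?thesis .
qed

definition coreok :: "nat \<Rightarrow> nat \<Rightarrow> vgen word \<Rightarrow> bool" where
  "coreok n a C \<longleftrightarrow> (\<forall>(y, b) \<in> set C. b \<and> vgen_ok n y \<and> vidx y = a)"

lemma conj_far:
  assumes "1 \<le> a" "a < b" "b \<le> n" "1 \<le> k" "k < n" "Suc k < a \<or> b < k" "coreok n a C"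
  shows "word_eq (RR n) ([vl k] @ (vdown a b @ C @ vup a b) @ [vl k]) (vdown a b @ C @ vup a b)"
proof -
  have "word_eq (RR n) ([] @ [vl k] @ (vdown a b @ C @ vup a b) @ [vl k])
            ([] @ (vdown a b @ C @ vup a b) @ [vl k] @ [vl k])"
    by (rule far_list_gen[where x="V k" and L="vdown a b @ C @ vup a b" and u="[]" and v="[vl k]"]) (use assms in \<open>auto simp: vgen_ok_def far_def coreok_def dest!: vdown_letters vup_letters\<close>)
  also have "word_eq (RR n) \<dots> ((vdown a b @ C @ vup a b) @ [])"
    by (rule vw_sq[where k=k and u="vdown a b @ C @ vup a b" and v="[]"]) (use assms in simp_all)
  finally show ?thesis by simp
qed

lemma conj_mid:
  assumes "1 \<le> a" "Suc a \<le> k" "Suc (Suc k) \<le> b" "b \<le> n" "coreok n a C"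
  shows "word_eq (RR n) ([vl k] @ (vdown a b @ C @ vup a b) @ [vl k]) (vdown a b @ C @ vup a b)"
proof -
  have "word_eq (RR n) ([vl k] @ (vdown a b @ C @ vup a b) @ [vl k])
     (vdown a b @ [vl (Suc k)] @ (C @ vup a b @ [vl k]))"
    by (rule weq_rw[OF vdown_commute[OF assms(1-4)], where u="[]"]) simp_all
  also have "word_eq (RR n) \<dots> ((vdown a b @ [vl (Suc k)] @ C) @ [vl (Suc k)] @ vup a b)"
    by (rule weq_rw[OF vup_commute[OF assms(1-4)], where u="vdown a b @ [vl (Suc k)] @ C" and v="[]"]) simp_all
  also have "word_eq (RR n) \<dots> (vdown a b @ C @ [vl (Suc k)] @ [vl (Suc k)] @ vup a b)"
    by (rule far_list_gen[where x="V (Suc k)" and L=C and u="vdown a b" and v="[vl (Suc k)] @ vup a b"]) (use assms in \<open>auto simp: vgen_ok_def far_def coreok_def\<close>)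
  also have "word_eq (RR n) \<dots> ((vdown a b @ C) @ vup a b)"
    by (rule vw_sq[where k="Suc k" and u="vdown a b @ C" and v="vup a b"]) (use assms in simp_all)
  finally show ?thesis by simp
qed

lemma conj_bm1:
  assumes "Suc a < b" "b \<le> n" "1 \<le> a"
  shows "word_eq (RR n) ([vl (b - 1)] @ (vdown a b @ C @ vup a b) @ [vl (b - 1)])
      (vdown a (b - 1) @ C @ vup a (b - 1))"
proof -
  obtain b' where b: "b = Suc b'" using assms by (cases b) auto
  have ab: "a < b'" using assms b by simp
  have "[vl (b - 1)] @ (vdown a b @ C @ vup a b) @ [vl (b - 1)] =
        [] @ [vl b', vl b'] @ (vdown a b' @ C @ vup a b' @ [vl b', vl b'])"
    by (simp add: b vdown_Suc[OF ab] vup_Suc[OF ab])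
  also have "word_eq (RR n) \<dots> (vdown a b' @ C @ vup a b' @ [vl b', vl b'])"
    by (rule vw_sq[where k=b' and u="[]"]) (use assms b in simp_all)
  also have "word_eq (RR n) \<dots> ((vdown a b' @ C @ vup a b') @ [])"
    by (rule vw_sq[where k=b' and u="vdown a b' @ C @ vup a b'" and v="[]"]) (use assms b in simp_all)
  finally show ?thesis by (simp add: b)
qed

lemma conj_b:
  assumes "a < b"
  shows "[vl b] @ (vdown a b @ C @ vup a b) @ [vl b] = vdown a (Suc b) @ C @ vup a (Suc b)"
  by (simp add: vdown_Suc[OF assms] vup_Suc[OF assms])

lemma conj_am1:
  assumes "2 \<le> a" "a < b" "b \<le> n" "coreok n a C"
    and core: "word_eq (RR n) ([vl (a - 1)] @ C @ [vl (a - 1)]) ([vl a] @ C' @ [vl a])"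
  shows "word_eq (RR n) ([vl (a - 1)] @ (vdown a b @ C @ vup a b) @ [vl (a - 1)])
      (vdown (a - 1) b @ C' @ vup (a - 1) b)"
proof -
  have "word_eq (RR n) ([] @ [vl (a - 1)] @ vdown a b @ (C @ vup a b @ [vl (a - 1)]))
     ([] @ vdown a b @ [vl (a - 1)] @ (C @ vup a b @ [vl (a - 1)]))"
    by (rule far_list_gen[where x="V (a - 1)" and L="vdown a b" and u="[]" and v="C @ vup a b @ [vl (a - 1)]"]) (use assms in \<open>auto simp: vgen_ok_def far_def dest!: vdown_letters\<close>)
  also have "word_eq (RR n) \<dots> ((vdown a b @ [vl (a - 1)] @ C) @ [vl (a - 1)] @ vup a b @ [])"
    by (rule far_list_gen'[where x="V (a - 1)" and L="vup a b" and u="vdown a b @ [vl (a - 1)] @ C" and v="[]"]) (use assms in \<open>auto simp: vgen_ok_def far_def dest!: vup_letters\<close>)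
  also have "word_eq (RR n) \<dots> (vdown a b @ ([vl a] @ C' @ [vl a]) @ vup a b)"
    by (rule weq_rw[OF core, where u="vdown a b"]) simp_all
  also have "\<dots> = vdown (a - 1) b @ C' @ vup (a - 1) b"
    using assms vdown_low[of "a - 1" b] vup_low[of "a - 1" b] by simp
  finally show ?thesis by simp
qed

lemma conj_a:
  assumes "1 \<le> a" "Suc a < b" "b \<le> n" 
    and core: "word_eq (RR n) ([vl a, vl (Suc a)] @ C @ [vl (Suc a), vl a]) C'"
  shows "word_eq (RR n) ([vl a] @ (vdown a b @ C @ vup a b) @ [vl a])
      (vdown (Suc a) b @ C' @ vup (Suc a) b)"
proof -
  have "[vl a] @ (vdown a b @ C @ vup a b) @ [vl a] =
     [] @ [vl a] @ vdown (Suc a) b @ ([vl (Suc a)] @ C @ [vl (Suc a)] @ vup (Suc a) b @ [vl a])"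
    using vdown_low[OF assms(2)] vup_low[OF assms(2)] by simp
  also have "word_eq (RR n) \<dots> ([] @ vdown (Suc a) b @ [vl a] @ ([vl (Suc a)] @ C @ [vl (Suc a)] @ vup (Suc a) b @ [vl a]))"
    by (rule far_list_gen[where x="V a" and L="vdown (Suc a) b" and u="[]" and v="[vl (Suc a)] @ C @ [vl (Suc a)] @ vup (Suc a) b @ [vl a]"]) (use assms in \<open>auto simp: vgen_ok_def far_def dest!: vdown_letters\<close>)
  also have "word_eq (RR n) \<dots> ((vdown (Suc a) b @ [vl a] @ [vl (Suc a)] @ C @ [vl (Suc a)]) @ [vl a] @ vup (Suc a) b @ [])"
    by (rule far_list_gen'[where x="V a" and L="vup (Suc a) b" and u="vdown (Suc a) b @ [vl a] @ [vl (Suc a)] @ C @ [vl (Suc a)]" and v="[]"]) (use assms in \<open>auto simp: vgen_ok_def far_def dest!: vup_letters\<close>)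
  also have "word_eq (RR n) \<dots> (vdown (Suc a) b @ C' @ vup (Suc a) b)"
    by (rule weq_rw[OF core, where u="vdown (Suc a) b"]) simp_all
  finally show ?thesis .
qed

definition fw :: "(nat \<Rightarrow> vgen) \<Rightarrow> nat \<Rightarrow> nat \<Rightarrow> vgen word" where
  "fw c a b = vdown a b @ [cl c a, vl a] @ vup a b"
definition rw :: "(nat \<Rightarrow> vgen) \<Rightarrow> nat \<Rightarrow> nat \<Rightarrow> vgen word" where
  "rw c a b = vdown a b @ [vl a, cl c a, vl a, vl a] @ vup a b"
definition fusX :: "(nat \<Rightarrow> vgen) \<Rightarrow> nat \<Rightarrow> nat \<Rightarrow> vgen word" where
  "fusX c x y = (if x < y then fw c x y else rw c y x)"

lemma fusing_fusX: "fusing (Mu a b) = fusX Sig a b" "fusing (Gam a b) = fusX Tau a b"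
  by (simp_all add: fusX_def fw_def rw_def)

lemma rw_rs: "1 \<le> a \<Longrightarrow> a < n \<Longrightarrow> word_eq (RR n) (rw c a b) (vdown a b @ [vl a, cl c a] @ vup a b)"
  unfolding rw_def by (rule vw_sq[where k=a and u="vdown a b @ [vl a, cl c a]" and v="vup a b"]) simp_all

lemma coreok1: "c = Sig \<or> c = Tau \<Longrightarrow> 1 \<le> a \<Longrightarrow> a < n \<Longrightarrow> coreok n a [cl c a, vl a]"
  by (auto simp: coreok_def vgen_ok_def)
lemma coreok2: "c = Sig \<or> c = Tau \<Longrightarrow> 1 \<le> a \<Longrightarrow> a < n \<Longrightarrow> coreok n a [vl a, cl c a]"
  by (auto simp: coreok_def vgen_ok_def)

lemma conjF:
  assumes c: "c = Sig \<or> c = Tau" and ab: "1 \<le> a" "a < b" "b \<le> n" and k: "1 \<le> k" "k < n"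
  shows "word_eq (RR n) ([vl k] @ fw c a b @ [vl k]) (fusX c (tr k a) (tr k b))"
proof -
  have an: "a < n" using ab by simp
  consider "Suc k < a \<or> b < k" | "k = a - 1" "2 \<le> a" | "k = a" "b = Suc a" | "k = a" "Suc a < b"
    | "Suc a \<le> k" "Suc (Suc k) \<le> b" | "k = b - 1" "Suc a < b" | "k = b"
    using ab k by linarith
  then show ?thesis
  proof cases
    case 1
    have t: "tr k a = a" "tr k b = b" using 1 ab by (auto simp: transpose_def)
    show ?thesis unfolding t fusX_def fw_def using ab
      by (simp add: conj_far[OF ab k 1 coreok1[OF c ab(1) an], simplified])
  next
    case 2
    have t: "tr k a = a - 1" "tr k b = b" using 2 ab by (auto simp: transpose_def)
    have core: "word_eq (RR n) ([vl (a - 1)] @ [cl c a, vl a] @ [vl (a - 1)]) ([vl a] @ [cl c (a - 1), vl (a - 1)] @ [vl a])"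
      using core_F1[OF c, of "a - 1" n] 2 ab by simp
    have lt: "a - 1 < b" using ab by simp
    show ?thesis unfolding t fusX_def fw_def using ab 2 lt
      using conj_am1[OF 2(2) ab(2,3) coreok1[OF c ab(1) an] core] by simp
  next
    case 3
    have t: "tr k a = Suc a" "tr k b = a" using 3 by auto
    show ?thesis unfolding t fusX_def fw_def rw_def using 3 by (simp add: vdown_empty vup_empty)
  next
    case 4
    have t: "tr k a = Suc a" "tr k b = b" using 4 by auto
    have core: "word_eq (RR n) ([vl a, vl (Suc a)] @ [cl c a, vl a] @ [vl (Suc a), vl a]) [cl c (Suc a), vl (Suc a)]"
      using core_F2[OF c, of a n] 4 ab by simp
    show ?thesis unfolding t fusX_def fw_def using 4 conj_a[OF ab(1) 4(2) ab(3) core] by simp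
  next
    case 5
    have t: "tr k a = a" "tr k b = b" using 5 by (auto simp: transpose_def)
    show ?thesis unfolding t fusX_def fw_def using ab conj_mid[OF ab(1) 5 ab(3) coreok1[OF c ab(1) an]] by simp
  next
    case 6
    have t: "tr k a = a" "tr k b = b - 1" using 6 by (auto simp: transpose_def)
    have lt: "a < b - 1" using 6 by simp
    show ?thesis unfolding t fusX_def fw_def using 6 lt conj_bm1[OF 6(2) ab(3,1), where C="[cl c a, vl a]"] by simp
  next
    case 7
    have t: "tr k a = a" "tr k b = Suc b" using 7 ab by (auto simp: transpose_def)
    show ?thesis unfolding t fusX_def fw_def using 7 ab conj_b[OF ab(2), where C="[cl c a, vl a]"] by simp
  qed
qed

lemma conjR:
  assumes c: "c = Sig \<or> c = Tau" and ab: "1 \<le> a" "a < b" "b \<le> n" and k: "1 \<le> k" "k < n"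
  shows "word_eq (RR n) ([vl k] @ rw c a b @ [vl k]) (fusX c (tr k b) (tr k a))"
proof -
  have an: "a < n" using ab by simp
  let ?rs = "\<lambda>a b. vdown a b @ [vl a, cl c a] @ vup a b"
  have start: "word_eq (RR n) ([vl k] @ rw c a b @ [vl k]) ([vl k] @ ?rs a b @ [vl k])"
    by (rule weq_ctx[OF rw_rs[OF ab(1) an]])
  have bk: "word_eq (RR n) (?rs a' b') (rw c a' b')" if "1 \<le> a'" "a' < n" for a' b'
    by (rule weq_sym[OF rw_rs[OF that]])
  consider "Suc k < a \<or> b < k" | "k = a - 1" "2 \<le> a" | "k = a" "b = Suc a" | "k = a" "Suc a < b"
    | "Suc a \<le> k" "Suc (Suc k) \<le> b" | "k = b - 1" "Suc a < b" | "k = b"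
    using ab k by linarith
  then have "word_eq (RR n) ([vl k] @ ?rs a b @ [vl k]) (fusX c (tr k b) (tr k a))"
  proof cases
    case 1
    have t: "tr k a = a" "tr k b = b" using 1 ab by (auto simp: transpose_def)
    show ?thesis unfolding t fusX_def using ab
      using weq_trans[OF conj_far[OF ab k 1 coreok2[OF c ab(1) an]] bk[OF ab(1) an]] by simp
  next
    case 2
    have t: "tr k a = a - 1" "tr k b = b" using 2 ab by (auto simp: transpose_def)
    have core: "word_eq (RR n) ([vl (a - 1)] @ [vl a, cl c a] @ [vl (a - 1)]) ([vl a] @ [vl (a - 1), cl c (a - 1)] @ [vl a])"
      using core_R1[OF c, of "a - 1" n] 2 ab by simp
    have lt: "a - 1 < b" "1 \<le> a - 1" "a - 1 < n" using ab 2 by auto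
    show ?thesis unfolding t fusX_def using ab 2 lt
      using weq_trans[OF conj_am1[OF 2(2) ab(2,3) coreok2[OF c ab(1) an] core] bk[OF lt(2,3), of b]] by simp
  next
    case 3
    have t: "tr k a = Suc a" "tr k b = a" using 3 by auto
    have "word_eq (RR n) [vl a, vl a, cl c a, vl a] [cl c a, vl a]"
      by (rule vw_sq[where k=a and u="[]"]) (use ab an in simp_all)
    then show ?thesis unfolding t fusX_def fw_def using 3 by (simp add: vdown_empty vup_empty)
  next
    case 4
    have t: "tr k a = Suc a" "tr k b = b" using 4 by auto
    have core: "word_eq (RR n) ([vl a, vl (Suc a)] @ [vl a, cl c a] @ [vl (Suc a), vl a]) [vl (Suc a), cl c (Suc a)]"
      using core_R2[OF c, of a n] 4 ab by simp
    show ?thesis unfolding t fusX_def using 4 ab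
      weq_trans[OF conj_a[OF ab(1) 4(2) ab(3) core] bk[of "Suc a" b]] by simp
  next
    case 5
    have t: "tr k a = a" "tr k b = b" using 5 by (auto simp: transpose_def)
    show ?thesis unfolding t fusX_def using ab
      weq_trans[OF conj_mid[OF ab(1) 5 ab(3) coreok2[OF c ab(1) an]] bk[OF ab(1) an]] by simp
  next
    case 6
    have t: "tr k a = a" "tr k b = b - 1" using 6 by (auto simp: transpose_def)
    have lt: "\<not> b - 1 < a" using 6 by simp
    show ?thesis unfolding t fusX_def using 6 ab lt
      weq_trans[OF conj_bm1[OF 6(2) ab(3,1)] bk[OF ab(1) an]] by simp
  next
    case 7
    have t: "tr k a = a" "tr k b = Suc b" using 7 ab by (auto simp: transpose_def)
    show ?thesis unfolding t fusX_def using 7 ab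
      conj_b[OF ab(2), of "[vl a, cl c a]"] bk[OF ab(1) an, of "Suc b"]
      by simp
  qed
  then show ?thesis using start by (rule weq_trans[rotated])
qed

fun rl :: "(nat \<Rightarrow> nat) \<Rightarrow> pgen \<Rightarrow> pgen" where
  "rl p (Mu a b) = Mu (p a) (p b)"
| "rl p (Gam a b) = Gam (p a) (p b)"

lemma rl_rl[simp]: "rl p (rl q g) = rl (p \<circ> q) g" by (cases g) auto
lemma rl_id[simp]: "rl id g = g" by (cases g) auto
lemma rl_id'[simp]: "rl (\<lambda>a. a) g = g" by (cases g) auto

lemma perm_range: "p permutes {1..n} \<Longrightarrow> 1 \<le> x \<Longrightarrow> x \<le> n \<Longrightarrow> 1 \<le> p x \<and> p x \<le> n"
  using permutes_in_image[of p "{1..n}" x] by auto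

lemma pgen_ok_rl: assumes "p permutes {1..n}" "pgen_ok n g" shows "pgen_ok n (rl p g)"
proof (cases g)
  case (Mu a b)
  then show ?thesis using assms(2) perm_range[OF assms(1), of a] perm_range[OF assms(1), of b] permutes_inj[OF assms(1)]
    by (auto simp: inj_eq)
next
  case (Gam a b)
  then show ?thesis using assms(2) perm_range[OF assms(1), of a] perm_range[OF assms(1), of b] permutes_inj[OF assms(1)]
    by (auto simp: inj_eq)
qed

lemma conj1:
  assumes "pgen_ok n g" "1 \<le> k" "k < n"
  shows "word_eq (RR n) ([vl k] @ fusing g @ [vl k]) (fusing (rl (tr k) g))"
proof (cases g)
  case (Mu a b)
  show ?thesis
  proof (cases "a < b")
    case True
    have e: "fusX Sig a b = fw Sig a b" using True by (simp add: fusX_def)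
    show ?thesis unfolding Mu rl.simps fusing_fusX e by (rule conjF) (use assms Mu True in auto)
  next
    case False
    then have "b < a" using assms Mu by auto
    have e: "fusX Sig a b = rw Sig b a" using False by (simp add: fusX_def)
    show ?thesis unfolding Mu rl.simps fusing_fusX e by (rule conjR) (use assms Mu \<open>b < a\<close> in auto)
  qed
next
  case (Gam a b)
  show ?thesis
  proof (cases "a < b")
    case True
    have e: "fusX Tau a b = fw Tau a b" using True by (simp add: fusX_def)
    show ?thesis unfolding Gam rl.simps fusing_fusX e by (rule conjF) (use assms Gam True in auto)
  next
    case False
    then have "b < a" using assms Gam by auto
    have e: "fusX Tau a b = rw Tau b a" using False by (simp add: fusX_def)
    show ?thesis unfolding Gam rl.simps fusing_fusX e by (rule conjR) (use assms Gam \<open>b < a\<close> in auto)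
  qed
qed

lemma conj1':
  assumes "pgen_ok n g" "1 \<le> k" "k < n"
  shows "word_eq (RR n) ([vl k] @ fusing g) (fusing (rl (tr k) g) @ [vl k])"
proof -
  have "word_eq (RR n) ([vl k] @ fusing g) (([vl k] @ fusing g @ [vl k]) @ [vl k])"
    by (rule weq_sym, rule vw_sq[where k=k and u="[vl k] @ fusing g" and v="[]"]) (use assms in simp_all)
  also have "word_eq (RR n) \<dots> (fusing (rl (tr k) g) @ [vl k])"
    by (rule weq_app[OF conj1[OF assms] weq_refl])
  finally show ?thesis .
qed

abbreviation pv :: "nat list \<Rightarrow> nat \<Rightarrow> nat" where "pv ks \<equiv> vsg_perm (vw ks)"

lemma pv_Cons: "pv (k # ks) = tr k \<circ> pv ks" by simp

definition kok :: "nat \<Rightarrow> nat list \<Rightarrow> bool" where "kok n ks \<longleftrightarrow> (\<forall>k\<in>set ks. 1 \<le> k \<and> k < n)"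

lemma tr_permutes: "1 \<le> k \<Longrightarrow> k < n \<Longrightarrow> tr k permutes {1..n}"
  by (rule permutes_swap_id) auto

lemma pv_permutes: "kok n ks \<Longrightarrow> pv ks permutes {1..n}"
proof (induction ks)
  case Nil then show ?case using permutes_id[of "{1..n}"] by (simp add: id_def)
next
  case (Cons k ks)
  have "tr k permutes {1..n}" using Cons.prems by (intro tr_permutes) (auto simp: kok_def)
  moreover have "pv ks permutes {1..n}" using Cons by (auto simp: kok_def)
  ultimately
  show ?case using permutes_compose[of "pv ks" "{1..n}" "tr k"] by (simp add: comp_def)
qed

lemma conjW:
  assumes "kok n ks" "pgen_ok n g"
  shows "word_eq (RR n) (vw ks @ fusing g) (fusing (rl (pv ks) g) @ vw ks)"
  using assms
proof (induction ks arbitrary: g)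
  case Nil then show ?case by simp
next
  case (Cons k ks)
  have k: "1 \<le> k" "k < n" "kok n ks" using Cons.prems by (auto simp: kok_def)
  have okg: "pgen_ok n (rl (pv ks) g)" by (rule pgen_ok_rl[OF pv_permutes[OF k(3)] Cons.prems(2)])
  have "word_eq (RR n) (vw (k # ks) @ fusing g) ([vl k] @ (fusing (rl (pv ks) g) @ vw ks))"
    using weq_ctx[OF Cons.IH[OF k(3) Cons.prems(2)], of "[vl k]" "[]"] by simp
  also have "word_eq (RR n) \<dots> ((fusing (rl (tr k) (rl (pv ks) g)) @ [vl k]) @ vw ks)"
    using weq_ctx[OF conj1'[OF okg k(1,2)], of "[]" "vw ks"] by simp
  finally show ?case by (simp add: comp_def)
qed

lemma conjW_inv:
  assumes "kok n ks" "pgen_ok n g"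
  shows "word_eq (RR n) (vw ks @ inv_word (fusing g)) (inv_word (fusing (rl (pv ks) g)) @ vw ks)"
  by (rule weq_conj_inv[OF conjW[OF assms]])

definition inr :: "nat \<Rightarrow> nat \<Rightarrow> bool" where "inr n k \<longleftrightarrow> 1 \<le> k \<and> k < n"

fun step :: "nat \<Rightarrow> (nat \<Rightarrow> nat) \<Rightarrow> vgen \<times> bool \<Rightarrow> nat \<Rightarrow> nat" where
  "step n s (x, b) = (if inr n (vidx x) then s \<circ> tr (vidx x) else s)"

fun fl :: "nat \<Rightarrow> (nat \<Rightarrow> nat) \<Rightarrow> vgen \<times> bool \<Rightarrow> pgen word" where
  "fl n s (V k, b) = []"
| "fl n s (Sig k, b) = (if inr n k then (if b then [(Mu (s k) (s (Suc k)), True)] else [(Mu (s (Suc k)) (s k), False)]) else [])"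
| "fl n s (Tau k, b) = (if inr n k then (if b then [(Gam (s k) (s (Suc k)), True)] else [(Gam (s (Suc k)) (s k), False)]) else [])"

fun F :: "nat \<Rightarrow> (nat \<Rightarrow> nat) \<Rightarrow> vgen word \<Rightarrow> pgen word" where
  "F n s [] = []"
| "F n s (l # w) = fl n s l @ F n (step n s l) w"

fun S :: "nat \<Rightarrow> (nat \<Rightarrow> nat) \<Rightarrow> vgen word \<Rightarrow> nat \<Rightarrow> nat" where
  "S n s [] = s"
| "S n s (l # w) = S n (step n s l) w"

lemma F_append: "F n s (a @ b) = F n s a @ F n (S n s a) b"
  by (induction a arbitrary: s) auto

lemma S_append: "S n s (a @ b) = S n (S n s a) b"
  by (induction a arbitrary: s) auto

lemma S_allok: "allok n w \<Longrightarrow> S n s w = s \<circ> vsg_perm w"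
proof (induction w arbitrary: s)
  case Nil then show ?case by simp
next
  case (Cons l w)
  obtain x b where l: "l = (x, b)" by (cases l)
  have "inr n (vidx x)" "allok n w" using Cons.prems l by (auto simp: allok_def vgen_ok_def inr_def)
  then show ?case using Cons.IH l by (simp add: comp_assoc)
qed

definition ix :: "vgen word \<Rightarrow> nat list" where "ix w = map (\<lambda>(x, b). vidx x) w"

lemma ix_simps[simp]: "ix [] = []" "ix ((x, b) # w) = vidx x # ix w" "ix (a @ c) = ix a @ ix c"
  by (simp_all add: ix_def)

lemma pv_ix: "pv (ix w) = vsg_perm w"
proof (induction w)
  case Nil then show ?case by simp
next
  case (Cons l w) then show ?case by (cases l) simp
qed

lemma kok_ix: "allok n w \<Longrightarrow> kok n (ix w)"
  by (induction w) (auto simp: allok_def kok_def vgen_ok_def ix_def)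

lemma kok_append[simp]: "kok n (a @ b) \<longleftrightarrow> kok n a \<and> kok n b" by (auto simp: kok_def)
lemma kok_simps[simp]: "kok n []" "kok n (k # ks) \<longleftrightarrow> 1 \<le> k \<and> k < n \<and> kok n ks" by (auto simp: kok_def)
lemma allok_simps[simp]: "allok n []" "allok n ((x, b) # w) \<longleftrightarrow> vgen_ok n x \<and> allok n w"
  "allok n (a @ c) \<longleftrightarrow> allok n a \<and> allok n c" by (auto simp: allok_def)

lemma letter_decomp:
  assumes ks: "kok n ks" and x: "vgen_ok n x"
  shows "word_eq (RR n) (vw ks @ [(x, b)]) (wsubst fusing (fl n (pv ks) (x, b)) @ vw (ks @ [vidx x]))"
proof -
  have gen: "word_eq (RR n) (vw ks @ [(c k, b)]) (wsubst fusing [(if b then (rl (pv ks) (mk k (Suc k)), True) else (rl (pv (ks @ [k])) (mk k (Suc k)), False))] @ vw (ks @ [k]))"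
    if cm: "(c = Sig \<and> mk = Mu) \<or> (c = Tau \<and> mk = Gam)" and k: "1 \<le> k" "k < n" for c mk k
  proof -
    let ?g = "mk k (Suc k)"
    have fg: "fusing ?g = [cl c k, vl k]" using cm by (auto simp: vdown_empty vup_empty)
    have okg: "pgen_ok n ?g" using cm k by auto
    show ?thesis
    proof (cases b)
      case True
      have "word_eq (RR n) (vw ks @ [(c k, True)]) (vw ks @ fusing ?g @ [vl k])"
        unfolding fg by (rule weq_sym, rule vw_sq[where k=k and u="vw ks @ [cl c k]" and v="[]"]) (use k in simp_all)
      also have "word_eq (RR n) \<dots> (fusing (rl (pv ks) ?g) @ vw ks @ [vl k])"
        using weq_ctx[OF conjW[OF ks okg], of "[]" "[vl k]"] by simp
      finally show ?thesis using True by simp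
    next
      case False
      have "word_eq (RR n) (vw ks @ [(c k, False)]) (vw (ks @ [k]) @ inv_word (fusing ?g))"
        unfolding fg by (rule weq_sym, rule weq_cancel_at[where u="vw ks" and x="V k" and b=True]) simp_all
      also have "word_eq (RR n) \<dots> (inv_word (fusing (rl (pv (ks @ [k])) ?g)) @ vw (ks @ [k]))"
        by (rule conjW_inv) (use ks k okg in simp_all)
      finally show ?thesis using False by simp
    qed
  qed
  show ?thesis
  proof (cases x)
    case (V k)
    have k: "1 \<le> k" "k < n" using x V by (auto simp: vgen_ok_def)
    have "word_eq (RR n) [(V k, b)] [vl k]" by (cases b) (use k vsg_vinv in auto)
    then show ?thesis using V weq_app[OF weq_refl[of _ "vw ks"]] by simp
  next
    case (Sig k)
    have k: "1 \<le> k" "k < n" using x Sig by (auto simp: vgen_ok_def)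
    show ?thesis using gen[of Sig Mu k] k Sig by (cases b) (auto simp: inr_def comp_def)
  next
    case (Tau k)
    have k: "1 \<le> k" "k < n" using x Tau by (auto simp: vgen_ok_def)
    show ?thesis using gen[of Tau Gam k] k Tau by (cases b) (auto simp: inr_def comp_def)
  qed
qed

lemma decomp:
  assumes "allok n w"
  shows "word_eq (RR n) w (wsubst fusing (F n id w) @ vw (ix w))"
  using assms
proof (induction w rule: rev_induct)
  case Nil then show ?case by simp
next
  case (snoc l w)
  obtain x b where l: "l = (x, b)" by (cases l)
  have ok: "allok n w" "vgen_ok n x" using snoc.prems l by auto
  have S: "S n id w = pv (ix w)" using S_allok[OF ok(1)] by (simp add: pv_ix)
  have "word_eq (RR n) (w @ [l]) (wsubst fusing (F n id w) @ (vw (ix w) @ [(x, b)]))"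
    using weq_app[OF snoc.IH[OF ok(1)] weq_refl[of _ "[l]"]] by (simp only: l append_assoc)
  also have "word_eq (RR n) \<dots> (wsubst fusing (F n id w) @ (wsubst fusing (fl n (pv (ix w)) (x, b)) @ vw (ix w @ [vidx x])))"
    by (rule weq_app[OF weq_refl letter_decomp[OF kok_ix[OF ok(1)] ok(2)]])
  finally show ?case by (simp only: F_append S l wsubst_append append_assoc ix_simps F.simps append_Nil2)
qed

lemma step_permutes: "s permutes {1..n} \<Longrightarrow> step n s l permutes {1..n}"
proof -
  assume s: "s permutes {1..n}"
  obtain x b where l: "l = (x, b)" by (cases l)
  show ?thesis
  proof (cases "inr n (vidx x)")
    case True
    then have t: "tr (vidx x) permutes {1..n}" by (intro tr_permutes) (auto simp: inr_def)
    show ?thesis using permutes_compose[OF t s] True l by simp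
  qed (use s l in simp)
qed

lemma F_ok: "s permutes {1..n} \<Longrightarrow> (\<forall>(g, b) \<in> set (F n s w). pgen_ok n g)"
proof (induction w arbitrary: s)
  case Nil then show ?case by simp
next
  case (Cons l w)
  obtain x b where l: "l = (x, b)" by (cases l)
  have "\<forall>(g, b) \<in> set (fl n s l). pgen_ok n g"
  proof (cases x)
    case (Sig k)
    then show ?thesis using l perm_range[OF Cons.prems, of k] perm_range[OF Cons.prems, of "Suc k"]
      permutes_inj[OF Cons.prems] by (auto simp: inr_def inj_eq)
  next
    case (Tau k)
    then show ?thesis using l perm_range[OF Cons.prems, of k] perm_range[OF Cons.prems, of "Suc k"]
      permutes_inj[OF Cons.prems] by (auto simp: inr_def inj_eq)
  qed (use l in simp)
  moreover have "\<forall>(g, b) \<in> set (F n (step n s l) w). pgen_ok n g"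
    by (rule Cons.IH[OF step_permutes[OF Cons.prems]])
  ultimately show ?case by (simp only: F.simps set_append ball_Un)
qed

lemma tr_braid1: "tr i \<circ> (tr (Suc i) \<circ> tr i) = tr (Suc i) \<circ> (tr i \<circ> tr (Suc i))"
  by (simp add: fun_eq_iff transpose_def)

lemma tr_braid: "adj i j \<Longrightarrow> tr i \<circ> (tr j \<circ> tr i) = tr j \<circ> (tr i \<circ> tr j)"
  unfolding adj_def using tr_braid1[of i] tr_braid1[of j] by auto

lemma tr_far: "far i j \<Longrightarrow> tr i \<circ> tr j = tr j \<circ> tr i"
  unfolding far_def by (simp add: fun_eq_iff transpose_def) auto

lemma vidx3: "g \<in> {Sig, Tau, V} \<Longrightarrow> vidx (g i) = i" by auto

lemma tr_braid_pt: "adj i j \<Longrightarrow> tr i (tr j (tr i x)) = tr j (tr i (tr j x))"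
  using tr_braid[of i j] by (simp add: fun_eq_iff)
lemma tr_far_pt: "far i j \<Longrightarrow> tr i (tr j x) = tr j (tr i x)"
  using tr_far[of i j] by (simp add: fun_eq_iff)

lemma rel_perm: "(l, r) \<in> vsg_rels n \<Longrightarrow> vsg_perm l = vsg_perm r"
  unfolding vsg_rels_def
  apply (elim UnE)
  subgoal by clarsimp
  subgoal by clarsimp
  subgoal by (clarsimp simp: fun_eq_iff) (erule tr_braid_pt)
  subgoal by (clarsimp simp: fun_eq_iff) (erule tr_braid_pt)
  subgoal by (clarsimp simp: fun_eq_iff) (erule tr_braid_pt)
  subgoal by (clarsimp simp: fun_eq_iff) (erule tr_braid_pt)
  subgoal by (clarsimp simp: fun_eq_iff) (erule tr_braid_pt)
  subgoal by (clarsimp simp: fun_eq_iff vidx3) (erule tr_far_pt)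
  done

lemma weq_perm: "word_eq (vsg_rels n) w1 w2 \<Longrightarrow> vsg_perm w1 = vsg_perm w2"
proof (induction rule: word_eq.induct)
  case (cancel u x b v)
  have "tr (vidx x) \<circ> (tr (vidx x) \<circ> vsg_perm v) = vsg_perm v"
    by (simp add: comp_assoc[symmetric])
  then show ?case by simp
next
  case (rel l r u v)
  then show ?case using rel_perm[OF rel] by simp
qed (auto intro: sym trans)

definition cc :: "nat \<Rightarrow> nat \<Rightarrow> nat list" where "cc m j = rev [j..<Suc m]"

lemma cc_top: "cc m (Suc m) = []" by (simp add: cc_def)
lemma cc_step: "j \<le> m \<Longrightarrow> cc m j = cc m (Suc j) @ [j]"
  by (simp add: cc_def upt_conv_Cons)
lemma cc_split: "j < k \<Longrightarrow> k \<le> m \<Longrightarrow> cc m j = cc m (Suc k) @ [k, k - 1] @ rev [j..<k - 1]"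
proof -
  assume h: "j < k" "k \<le> m"
  have 1: "[j..<Suc m] = [j..<k - 1] @ [k - 1..<Suc m]" using upt_add_eq_append[of j "k - 1" "Suc m - (k - 1)"] h by simp
  have 2: "[k - 1..<Suc m] = (k - 1) # k # [Suc k..<Suc m]" using h by (simp add: upt_conv_Cons)
  show ?thesis using 1 2 h by (simp add: cc_def)
qed

lemma cc_letters: "i \<in> set (cc m j) \<Longrightarrow> j \<le> i \<and> i \<le> m" by (auto simp: cc_def)

lemma vw_letters: "(y, b) \<in> set (vw ks) \<Longrightarrow> b \<and> (\<exists>i\<in>set ks. y = V i)" by (auto simp: vw_def)

lemma NF:
  assumes mn: "m < n" and ks: "\<forall>k\<in>set ks. 1 \<le> k \<and> k \<le> m"
  shows "\<exists>ks' j. kok m ks' \<and> 1 \<le> j \<and> j \<le> Suc m \<and> word_eq (RR n) (vw ks) (vw (ks' @ cc m j))"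
  using ks
proof (induction ks rule: rev_induct)
  case Nil
  show ?case by (rule exI[of _ "[]"], rule exI[of _ "Suc m"]) (simp add: cc_top)
next
  case (snoc k ks)
  then obtain ks' j where IH: "kok m ks'" "1 \<le> j" "j \<le> Suc m" "word_eq (RR n) (vw ks) (vw (ks' @ cc m j))"
    by auto
  have k: "1 \<le> k" "k \<le> m" using snoc.prems by auto
  have base: "word_eq (RR n) (vw (ks @ [k])) (vw ks' @ vw (cc m j) @ [vl k])"
    using weq_app[OF IH(4) weq_refl[of _ "[vl k]"]] by simp
  consider "j = Suc m" "k = m" | "j = Suc m" "k < m" | "j \<le> m" "k = j" | "j \<le> m" "Suc k = j"
    | "j \<le> m" "Suc k < j" | "j \<le> m" "j < k" using IH k by linarith
  then show ?case
  proof cases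
    case 1
    show ?thesis using base 1 IH(1) k
      by (intro exI[of _ ks'] exI[of _ m]) (simp add: cc_top cc_step)
  next
    case 2
    show ?thesis using base 2 IH(1) k
      by (intro exI[of _ "ks' @ [k]"] exI[of _ "Suc m"]) (simp add: cc_top)
  next
    case 3
    have "word_eq (RR n) (vw ks' @ vw (cc m j) @ [vl k]) ((vw ks' @ vw (cc m (Suc j))) @ [])"
      by (rule vw_sq[where k=k and u="vw ks' @ vw (cc m (Suc j))" and v="[]"]) (use 3 k mn cc_step[OF 3(1)] in simp_all)
    then show ?thesis using base 3 IH(1) k
      by (intro exI[of _ ks'] exI[of _ "Suc j"]) (auto intro: weq_trans)
  next
    case 4
    have "cc m j @ [k] = cc m k" using 4 cc_step[of k m] by simp
    then have "vw (cc m j) @ [vl k] = vw (cc m k)" by (metis vw_simps(1,2,3))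
    then show ?thesis using base 4 IH(1) k
      by (intro exI[of _ ks'] exI[of _ k]) simp
  next
    case 5
    have "word_eq (RR n) (vw ks' @ vw (cc m j) @ [vl k] @ []) (vw ks' @ [vl k] @ vw (cc m j) @ [])"
      by (rule far_list_gen'[where x="V k"])
         (use 5 k mn in \<open>auto simp: vgen_ok_def far_def dest!: vw_letters cc_letters\<close>)
    then show ?thesis using base 5 IH(1) k
      by (intro exI[of _ "ks' @ [k]"] exI[of _ j]) (auto intro: weq_trans)
  next
    case 6
    have j1: "1 \<le> j" "2 \<le> k" using IH(2) 6 by auto
    let ?A = "vw (cc m (Suc k))" and ?B = "vw (rev [j..<k - 1])"
    have e: "vw (cc m j) = ?A @ [vl k, vl (k - 1)] @ ?B" using cc_split[OF 6(2) k(2)] by simp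
    have "vw ks' @ vw (cc m j) @ [vl k] = (vw ks' @ ?A @ [vl k, vl (k - 1)]) @ ?B @ [vl k] @ []"
      using e by simp
    also have "word_eq (RR n) \<dots> ((vw ks' @ ?A @ [vl k, vl (k - 1)]) @ [vl k] @ ?B @ [])"
      by (rule far_list_gen'[where x="V k" and L="?B" and u="vw ks' @ ?A @ [vl k, vl (k - 1)]" and v="[]"])
         (use 6 k mn j1 in \<open>auto simp: vgen_ok_def far_def dest!: vw_letters\<close>)
    also have "word_eq (RR n) \<dots> ((vw ks' @ ?A) @ [vl (k - 1), vl k, vl (k - 1)] @ ?B)"
      by (rule weq_rw[OF vsg_vbraid[of k n "k - 1"], where u="vw ks' @ ?A" and v="?B"])
         (use 6 k mn j1 in \<open>auto simp: adj_def\<close>)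
    also have "word_eq (RR n) \<dots> (vw ks' @ [vl (k - 1)] @ ?A @ ([vl k, vl (k - 1)] @ ?B))"
      by (rule far_list_gen'[where x="V (k - 1)"])
         (use 6 k mn j1 in \<open>auto simp: vgen_ok_def far_def dest!: vw_letters cc_letters\<close>)
    also have "\<dots> = vw ((ks' @ [k - 1]) @ cc m j)" using e by simp
    finally show ?thesis using base 6 IH(1) k j1
      by (intro exI[of _ "ks' @ [k - 1]"] exI[of _ j]) (auto intro: weq_trans)
  qed
qed

lemma pv_fix: "\<forall>i\<in>set ks. i < m \<Longrightarrow> pv ks (Suc m) = Suc m"
  by (induction ks) (auto simp: transpose_def)

lemma coxeter_aux:
  "m \<le> n \<Longrightarrow> \<forall>k\<in>set ks. 1 \<le> k \<and> k < m \<Longrightarrow> pv ks = id \<Longrightarrow> word_eq (RR n) (vw ks) []"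
proof (induction m arbitrary: ks)
  case 0 then show ?case by (cases ks) auto
next
  case (Suc m)
  have mn: "m < n" using Suc.prems by simp
  have ks: "\<forall>k\<in>set ks. 1 \<le> k \<and> k \<le> m" using Suc.prems by auto
  obtain ks' j where nf: "kok m ks'" "1 \<le> j" "j \<le> Suc m" "word_eq (RR n) (vw ks) (vw (ks' @ cc m j))"
    using NF[OF mn ks] by blast
  have pe: "pv (ks' @ cc m j) = id" using weq_perm[OF nf(4)] Suc.prems(3) by metis
  have "j = Suc m"
  proof (rule ccontr)
    assume "j \<noteq> Suc m"
    then have jm: "j \<le> m" using nf by simp
    have c1: "pv (cc m j) (Suc m) = m"
    proof -
      have "cc m j = m # rev [j..<m]" using jm by (simp add: cc_def)
      moreover have "pv (rev [j..<m]) (Suc m) = Suc m"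
        by (rule pv_fix) auto
      ultimately show ?thesis by simp
    qed
    have "pv ks' permutes {1..m}" using pv_permutes[OF nf(1)] .
    then have "pv ks' m \<in> {1..m}" using jm nf(2) permutes_in_image by fastforce
    moreover have "pv ks' m = Suc m"
    proof -
      have "pv (ks' @ cc m j) (Suc m) = Suc m" using pe by simp
      then have "pv ks' (pv (cc m j) (Suc m)) = Suc m" by simp
      then show ?thesis using c1 by simp
    qed
    ultimately show False by simp
  qed
  then have "word_eq (RR n) (vw ks) (vw ks')" using nf(4) by (simp add: cc_top)
  moreover have "word_eq (RR n) (vw ks') []"
    using Suc.IH[of ks'] Suc.prems nf(1) weq_perm[OF nf(4)] \<open>j = Suc m\<close>
    by (simp add: kok_def cc_top)
  ultimately show ?case by (rule weq_trans)
qed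

lemma coxeter: "kok n ks \<Longrightarrow> pv ks = id \<Longrightarrow> word_eq (RR n) (vw ks) []"
  by (rule coxeter_aux[of n]) (auto simp: kok_def)

lemma part2:
  assumes "allok n w" "vsg_perm w = id"
  shows "\<exists>u. (\<forall>(x, b) \<in> set u. pgen_ok n x) \<and> word_eq (RR n) (wsubst fusing u) w"
proof -
  have d: "word_eq (RR n) w (wsubst fusing (F n id w) @ vw (ix w))" by (rule decomp[OF assms(1)])
  have c: "word_eq (RR n) (vw (ix w)) []"
    by (rule coxeter) (use kok_ix[OF assms(1)] pv_ix[of w] assms(2) in auto)
  have "word_eq (RR n) w (wsubst fusing (F n id w))"
    using weq_trans[OF d weq_app[OF weq_refl c]] by simp
  moreover have "\<forall>(x, b) \<in> set (F n id w). pgen_ok n x" by (rule F_ok) (rule permutes_id)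
  ultimately show ?thesis by (blast intro: weq_sym)
qed

lemma fl_inv: "fl n s (x, \<not> b) = inv_word (fl n (step n s (x, \<not> b)) (x, b))"
  by (cases x) (auto simp: transpose_def)

lemma step_step: "step n (step n s (x, b')) (x, b) = s"
  by (auto simp: comp_assoc)

lemma F_inv: "F n s (inv_word w) = inv_word (F n (S n s (inv_word w)) w)"
proof (induction w arbitrary: s)
  case Nil then show ?case by simp
next
  case (Cons l w)
  obtain x b where l: "l = (x, b)" by (cases l)
  let ?s1 = "S n s (inv_word w)"
  have "F n s (inv_word (l # w)) = inv_word (F n ?s1 w) @ fl n ?s1 (x, \<not> b)"
    using Cons.IH by (simp add: l F_append)
  also have "\<dots> = inv_word (F n (S n s (inv_word (l # w))) (l # w))"
    using fl_inv[of n ?s1 x b] step_step[of n ?s1 x "\<not> b" b]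
    by (simp add: l S_append del: step.simps)
  finally show ?case .
qed

lemma F_Vs: "\<forall>(x, b) \<in> set w. \<exists>k. x = V k \<Longrightarrow> F n s w = []"
  by (induction w arbitrary: s) auto

lemma vdown_perm: "a < b \<Longrightarrow> vsg_perm (vdown a b) a = a \<and> vsg_perm (vdown a b) (Suc a) = b"
proof (induction b)
  case 0 then show ?case by simp
next
  case (Suc b)
  show ?case
  proof (cases "a < b")
    case True
    then show ?thesis using Suc.IH by (simp add: vdown_Suc transpose_def)
  next
    case False
    then have "b = a" using Suc by simp
    then show ?thesis by (simp add: vdown_empty)
  qed
qed

lemma allok_vdown: "1 \<le> a \<Longrightarrow> b \<le> n \<Longrightarrow> allok n (vdown a b)"
  by (auto simp: allok_def vgen_ok_def vdown_def)
lemma allok_vup: "1 \<le> a \<Longrightarrow> b \<le> n \<Longrightarrow> allok n (vup a b)"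
  by (auto simp: allok_def vgen_ok_def vup_def)

lemma F_fusX:
  assumes c: "(c = Sig \<and> mk = Mu) \<or> (c = Tau \<and> mk = Gam)" and ab: "1 \<le> a" "a < b" "b \<le> n"
  shows "F n s (fw c a b) = [(mk (s a) (s b), True)]"
    and "F n s (rw c a b) = [(mk (s b) (s a), True)]"
proof -
  have V1: "F n s' (vdown a b) = []" "F n s' (vup a b) = []" for s'
    by (auto intro!: F_Vs dest!: vdown_letters vup_letters)
  have SD: "S n s (vdown a b) = s \<circ> vsg_perm (vdown a b)" by (rule S_allok[OF allok_vdown[OF ab(1,3)]])
  have P: "vsg_perm (vdown a b) a = a" "vsg_perm (vdown a b) (Suc a) = b" using vdown_perm[OF ab(2)] by auto
  have inr: "inr n a" using ab by (simp add: inr_def)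
  show "F n s (fw c a b) = [(mk (s a) (s b), True)]"
    using c V1 SD P inr by (auto simp: fw_def F_append)
  show "F n s (rw c a b) = [(mk (s b) (s a), True)]"
    using c V1 SD P inr by (auto simp: rw_def F_append transpose_def)
qed

lemma F_fusing: "pgen_ok n g \<Longrightarrow> F n s (fusing g) = [(rl s g, True)]"
proof (cases g)
  case (Mu a b)
  assume ok: "pgen_ok n g"
  show ?thesis
  proof (cases "a < b")
    case True
    have e: "fusX Sig a b = fw Sig a b" using True by (simp add: fusX_def)
    show ?thesis unfolding Mu rl.simps fusing_fusX e by (rule F_fusX(1)) (use ok Mu True in auto)
  next
    case False
    have e: "fusX Sig a b = rw Sig b a" using False by (simp add: fusX_def)
    have "b < a" using False ok Mu by auto
    show ?thesis unfolding Mu rl.simps fusing_fusX e by (rule F_fusX(2)) (use ok Mu \<open>b < a\<close> in auto)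
  qed
next
  case (Gam a b)
  assume ok: "pgen_ok n g"
  show ?thesis
  proof (cases "a < b")
    case True
    have e: "fusX Tau a b = fw Tau a b" using True by (simp add: fusX_def)
    show ?thesis unfolding Gam rl.simps fusing_fusX e by (rule F_fusX(1)) (use ok Gam True in auto)
  next
    case False
    have e: "fusX Tau a b = rw Tau b a" using False by (simp add: fusX_def)
    have "b < a" using False ok Gam by auto
    show ?thesis unfolding Gam rl.simps fusing_fusX e by (rule F_fusX(2)) (use ok Gam \<open>b < a\<close> in auto)
  qed
qed

lemma allok_fusing: "pgen_ok n g \<Longrightarrow> allok n (fusing g)"
  by (cases g) (auto simp: allok_vdown allok_vup vgen_ok_def)

lemma allok_inv: "allok n (inv_word w) = allok n w"
  by (auto simp: allok_def inv_word_def)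

lemma S_fusing: "pgen_ok n g \<Longrightarrow> S n s (fusing g) = s"
  using S_allok[OF allok_fusing] by simp

lemma S_fusing_inv: "pgen_ok n g \<Longrightarrow> S n s (inv_word (fusing g)) = s"
  using S_allok[of n "inv_word (fusing g)" s] allok_fusing[of n g] vsg_perm_inv_id[OF vsg_perm_fusing[of g]]
  by (simp add: allok_inv)

lemma F_fusing_inv: "pgen_ok n g \<Longrightarrow> F n s (inv_word (fusing g)) = [(rl s g, False)]"
  using F_inv[of n s "fusing g"] S_fusing_inv[of n g s] F_fusing[of n g s] by simp

lemma F_ws:
  "\<forall>(g, b) \<in> set u. pgen_ok n g \<Longrightarrow> F n s (wsubst fusing u) = map (\<lambda>(g, b). (rl s g, b)) u \<and> S n s (wsubst fusing u) = s"
proof (induction u)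
  case Nil then show ?case by simp
next
  case (Cons l u)
  obtain g b where l: "l = (g, b)" by (cases l)
  have ok: "pgen_ok n g" using Cons.prems l by auto
  show ?case using Cons ok l
    by (cases b) (auto simp: F_append S_append F_fusing S_fusing F_fusing_inv S_fusing_inv)
qed

lemma F_ws_id: "\<forall>(g, b) \<in> set u. pgen_ok n g \<Longrightarrow> F n id (wsubst fusing u) = u"
proof -
  assume "\<forall>(g, b) \<in> set u. pgen_ok n g"
  then have "F n id (wsubst fusing u) = map (\<lambda>(g, b). (rl id g, b)) u" using F_ws by blast
  also have "\<dots> = u" by (induction u) auto
  finally show ?thesis .
qed

lemma vspg_at: "(l, r) \<in> vspg_rels n \<Longrightarrow> word_eq (vspg_rels n) l r"
  using word_eq.rel[of l r "vspg_rels n" "[]" "[]"] by simp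

abbreviation "inN n x \<equiv> 1 \<le> x \<and> x \<le> n"

lemma m1: "inN n a \<Longrightarrow> inN n b \<Longrightarrow> inN n c \<Longrightarrow> distinct [a, b, c] \<Longrightarrow>
  word_eq (vspg_rels n) [(Mu a b, True), (Mu a c, True), (Mu b c, True)] [(Mu b c, True), (Mu a c, True), (Mu a b, True)]"
  by (rule vspg_at) (auto simp: vspg_rels_def)
lemma m2: "inN n a \<Longrightarrow> inN n b \<Longrightarrow> inN n c \<Longrightarrow> distinct [a, b, c] \<Longrightarrow>
  word_eq (vspg_rels n) [(Mu a b, True), (Mu a c, True), (Gam b c, True)] [(Gam b c, True), (Mu a c, True), (Mu a b, True)]"
  by (rule vspg_at) (auto simp: vspg_rels_def)
lemma m3: "inN n a \<Longrightarrow> inN n b \<Longrightarrow> inN n c \<Longrightarrow> distinct [a, b, c] \<Longrightarrow>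
  word_eq (vspg_rels n) [(Gam a b, True), (Mu a c, True), (Mu b c, True)] [(Mu b c, True), (Mu a c, True), (Gam a b, True)]"
  by (rule vspg_at) (auto simp: vspg_rels_def)
lemma m4: "inN n a \<Longrightarrow> inN n b \<Longrightarrow> a \<noteq> b \<Longrightarrow>
  word_eq (vspg_rels n) [(Mu a b, True), (Gam b a, True)] [(Gam a b, True), (Mu b a, True)]"
  by (rule vspg_at) (auto simp: vspg_rels_def)
lemma m5: "inN n a \<Longrightarrow> inN n b \<Longrightarrow> inN n c \<Longrightarrow> inN n d \<Longrightarrow> distinct [a, b, c, d] \<Longrightarrow>
  word_eq (vspg_rels n) [(Mu a b, True), (Mu c d, True)] [(Mu c d, True), (Mu a b, True)]"
  by (rule vspg_at) (auto simp: vspg_rels_def)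
lemma m6: "inN n a \<Longrightarrow> inN n b \<Longrightarrow> inN n c \<Longrightarrow> inN n d \<Longrightarrow> distinct [a, b, c, d] \<Longrightarrow>
  word_eq (vspg_rels n) [(Gam a b, True), (Gam c d, True)] [(Gam c d, True), (Gam a b, True)]"
  by (rule vspg_at) (auto simp: vspg_rels_def)
lemma m7: "inN n a \<Longrightarrow> inN n b \<Longrightarrow> inN n c \<Longrightarrow> inN n d \<Longrightarrow> distinct [a, b, c, d] \<Longrightarrow>
  word_eq (vspg_rels n) [(Mu a b, True), (Gam c d, True)] [(Gam c d, True), (Mu a b, True)]"
  by (rule vspg_at) (auto simp: vspg_rels_def)
lemma m7': "inN n a \<Longrightarrow> inN n b \<Longrightarrow> inN n c \<Longrightarrow> inN n d \<Longrightarrow> distinct [a, b, c, d] \<Longrightarrow>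
  word_eq (vspg_rels n) [(Gam c d, True), (Mu a b, True)] [(Mu a b, True), (Gam c d, True)]"
  by (rule weq_sym, rule m7)

context
  fixes n :: nat and s :: "nat \<Rightarrow> nat"
  assumes s: "s permutes {1..n}"
begin

lemma rg: "1 \<le> x \<Longrightarrow> x \<le> n \<Longrightarrow> 1 \<le> s x \<and> s x \<le> n"
  by (rule perm_range[OF s])

lemma sinj: "s x = s y \<longleftrightarrow> x = y"
  using permutes_inj[OF s] by (simp add: inj_eq)

lemma famA: "(l, r) \<in> {([pos (V i), pos (V i)], []) | i. 1 \<le> i \<and> i < n}
   \<Longrightarrow> word_eq (vspg_rels n) (F n s l) (F n s r)"
  by auto

lemma famB: "(l, r) \<in> {([pos (Sig i), pos (Tau i)], [pos (Tau i), pos (Sig i)]) | i. 1 \<le> i \<and> i < n}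
   \<Longrightarrow> word_eq (vspg_rels n) (F n s l) (F n s r)"
proof -
  assume "(l, r) \<in> {([pos (Sig i), pos (Tau i)], [pos (Tau i), pos (Sig i)]) | i. 1 \<le> i \<and> i < n}"
  then obtain i where i: "l = [pos (Sig i), pos (Tau i)]" "r = [pos (Tau i), pos (Sig i)]" "1 \<le> i" "i < n" by blast
  show ?thesis using m4[where n=n and a="s i" and b="s (Suc i)"] rg[of i] rg[of "Suc i"] sinj[of i "Suc i"] i
    by (simp add: inr_def)
qed

lemma adj_cases: "adj i j \<Longrightarrow> (j = Suc i \<Longrightarrow> P) \<Longrightarrow> (i = Suc j \<Longrightarrow> P) \<Longrightarrow> P"
  by (auto simp: adj_def)

lemma famC: "(l, r) \<in> {([pos (Sig i), pos (Sig j), pos (Sig i)], [pos (Sig j), pos (Sig i), pos (Sig j)])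
       | i j. 1 \<le> i \<and> i < n \<and> 1 \<le> j \<and> j < n \<and> adj i j}
   \<Longrightarrow> word_eq (vspg_rels n) (F n s l) (F n s r)"
proof -
  assume "(l, r) \<in> {([pos (Sig i), pos (Sig j), pos (Sig i)], [pos (Sig j), pos (Sig i), pos (Sig j)])
       | i j. 1 \<le> i \<and> i < n \<and> 1 \<le> j \<and> j < n \<and> adj i j}"
  then obtain i j where ij: "l = [pos (Sig i), pos (Sig j), pos (Sig i)]" "r = [pos (Sig j), pos (Sig i), pos (Sig j)]"
    "1 \<le> i" "i < n" "1 \<le> j" "j < n" "adj i j" by blast
  have gen: "word_eq (vspg_rels n) (F n s [pos (Sig a), pos (Sig (Suc a)), pos (Sig a)])
     (F n s [pos (Sig (Suc a)), pos (Sig a), pos (Sig (Suc a))])" if a: "1 \<le> a" "Suc a < n" for a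
    using m1[where n=n and a="s a" and b="s (Suc a)" and c="s (Suc (Suc a))"] rg[of a] rg[of "Suc a"] rg[of "Suc (Suc a)"]
      sinj[of a "Suc a"] sinj[of a "Suc (Suc a)"] sinj[of "Suc a" "Suc (Suc a)"] a
    by (simp add: inr_def transpose_def)
  show ?thesis using ij(7)
  proof (rule adj_cases)
    assume "j = Suc i" then show ?thesis using gen[of i] ij by simp
  next
    assume "i = Suc j" then show ?thesis using weq_sym[OF gen[of j]] ij by simp
  qed
qed

lemma famD: "(l, r) \<in> {([pos (V i), pos (V j), pos (V i)], [pos (V j), pos (V i), pos (V j)])
       | i j. 1 \<le> i \<and> i < n \<and> 1 \<le> j \<and> j < n \<and> adj i j}
   \<Longrightarrow> word_eq (vspg_rels n) (F n s l) (F n s r)"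
  by auto

lemma famE: "c = Sig \<or> c = Tau \<Longrightarrow> (l, r) \<in> {([pos (V i), pos (c j), pos (V i)], [pos (V j), pos (c i), pos (V j)])
       | i j. 1 \<le> i \<and> i < n \<and> 1 \<le> j \<and> j < n \<and> adj i j}
   \<Longrightarrow> word_eq (vspg_rels n) (F n s l) (F n s r)"
  by (auto simp: inr_def transpose_def adj_def)

lemma famF: "(l, r) \<in> {([pos (Sig i), pos (Sig j), pos (Tau i)], [pos (Tau j), pos (Sig i), pos (Sig j)])
       | i j. 1 \<le> i \<and> i < n \<and> 1 \<le> j \<and> j < n \<and> adj i j}
   \<Longrightarrow> word_eq (vspg_rels n) (F n s l) (F n s r)"
proof -
  assume "(l, r) \<in> {([pos (Sig i), pos (Sig j), pos (Tau i)], [pos (Tau j), pos (Sig i), pos (Sig j)])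
       | i j. 1 \<le> i \<and> i < n \<and> 1 \<le> j \<and> j < n \<and> adj i j}"
  then obtain i j where ij: "l = [pos (Sig i), pos (Sig j), pos (Tau i)]" "r = [pos (Tau j), pos (Sig i), pos (Sig j)]"
    "1 \<le> i" "i < n" "1 \<le> j" "j < n" "adj i j" by blast
  have facts: "1 \<le> s a \<and> s a \<le> n" "1 \<le> s (Suc a) \<and> s (Suc a) \<le> n" "1 \<le> s (Suc (Suc a)) \<and> s (Suc (Suc a)) \<le> n"
     "s a \<noteq> s (Suc a)" "s a \<noteq> s (Suc (Suc a))" "s (Suc a) \<noteq> s (Suc (Suc a))" if a: "1 \<le> a" "Suc a < n" for a
    using rg[of a] rg[of "Suc a"] rg[of "Suc (Suc a)"] sinj[of a "Suc a"] sinj[of a "Suc (Suc a)"] sinj[of "Suc a" "Suc (Suc a)"] a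
    by auto
  show ?thesis using ij(7)
  proof (rule adj_cases)
    assume "j = Suc i"
    then show ?thesis using m2[where n=n and a="s i" and b="s (Suc i)" and c="s (Suc (Suc i))"] facts[of i] ij
      by (simp add: inr_def transpose_def)
  next
    assume "i = Suc j"
    then show ?thesis using weq_sym[OF m3[where n=n and a="s j" and b="s (Suc j)" and c="s (Suc (Suc j))"]] facts[of j] ij
      by (simp add: inr_def transpose_def)
  qed
qed

lemma famG: "(l, r) \<in> {([pos (g i), pos (h j)], [pos (h j), pos (g i)])
       | g h i j. g \<in> {Sig, Tau, V} \<and> h \<in> {Sig, Tau, V}
                 \<and> 1 \<le> i \<and> i < n \<and> 1 \<le> j \<and> j < n \<and> far i j}
   \<Longrightarrow> word_eq (vspg_rels n) (F n s l) (F n s r)"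
proof -
  assume "(l, r) \<in> {([pos (g i), pos (h j)], [pos (h j), pos (g i)])
       | g h i j. g \<in> {Sig, Tau, V} \<and> h \<in> {Sig, Tau, V}
                 \<and> 1 \<le> i \<and> i < n \<and> 1 \<le> j \<and> j < n \<and> far i j}"
  then obtain g h i j where ij: "l = [pos (g i), pos (h j)]" "r = [pos (h j), pos (g i)]"
    "g \<in> {Sig, Tau, V}" "h \<in> {Sig, Tau, V}" "1 \<le> i" "i < n" "1 \<le> j" "j < n" "far i j" by blast
  have t: "tr i j = j" "tr i (Suc j) = Suc j" "tr j i = i" "tr j (Suc i) = Suc i"
    using ij(9) by (auto simp: far_def transpose_def)
  have d: "distinct [s i, s (Suc i), s j, s (Suc j)]" using ij(9) sinj by (auto simp: far_def)
  have r: "inN n (s i)" "inN n (s (Suc i))" "inN n (s j)" "inN n (s (Suc j))"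
    using rg[of i] rg[of "Suc i"] rg[of j] rg[of "Suc j"] ij by auto
  have d': "distinct [s j, s (Suc j), s i, s (Suc i)]" using d by auto
  show ?thesis using ij(3,4) unfolding ij(1,2)
    by (auto simp: inr_def t ij(5-8) intro: m5[OF r d] m6[OF r d] m7[OF r d] m7'[OF r(3,4,1,2) d'])
qed

lemma rel_F: "(l, r) \<in> vsg_rels n \<Longrightarrow> word_eq (vspg_rels n) (F n s l) (F n s r)"
  unfolding vsg_rels_def
  apply (elim UnE)
  apply (erule famA)
  apply (erule famB)
  apply (erule famC)
  apply (erule famD)
  apply (erule famE[rotated], simp)
  apply (erule famE[rotated], simp)
  apply (erule famF)
  apply (erule famG)
  done

end

lemma rel_allok: "(l, r) \<in> vsg_rels n \<Longrightarrow> allok n l \<and> allok n r"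
  unfolding vsg_rels_def by (auto simp: allok_def vgen_ok_def)

lemma S_permutes: "s permutes {1..n} \<Longrightarrow> S n s w permutes {1..n}"
proof (induction w arbitrary: s)
  case Nil then show ?case by simp
next
  case (Cons l w)
  have "step n s l permutes {1..n}" by (rule step_permutes[OF Cons.prems])
  then show ?case using Cons.IH by (simp del: step.simps)
qed

lemma F_append3: "F n s (u @ p @ v) = F n s u @ F n (S n s u) p @ F n (S n (S n s u) p) v"
  by (simp only: F_append S_append)
lemma S_append3: "S n s (u @ p @ v) = S n (S n (S n s u) p) v"
  by (simp only: S_append)

lemma weq_F:
  assumes "word_eq (RR n) w1 w2"
  shows "\<forall>s. s permutes {1..n} \<longrightarrow> word_eq (vspg_rels n) (F n s w1) (F n s w2) \<and> S n s w1 = S n s w2"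
  using assms
proof (induction rule: word_eq.induct)
  case (refl w) then show ?case by simp
next
  case (sym u w) then show ?case by (auto intro: weq_sym)
next
  case (trans u v w) then show ?case by (auto intro: weq_trans)
next
  case (cancel u x b v)
  show ?case
  proof (intro allI impI)
    fix s :: "nat \<Rightarrow> nat" assume s: "s permutes {1..n}"
    let ?s1 = "S n s u"
    let ?s2 = "step n ?s1 (x, b)"
    have ss: "step n ?s2 (x, \<not> b) = ?s1" by (rule step_step)
    have mid: "F n ?s1 [(x, b), (x, \<not> b)] = fl n ?s1 (x, b) @ inv_word (fl n ?s1 (x, b))"
      using fl_inv[of n ?s2 x b] ss by (simp del: step.simps)
    have Sm: "S n ?s1 [(x, b), (x, \<not> b)] = ?s1" using ss by (simp del: step.simps)
    have "word_eq (vspg_rels n) (F n ?s1 [(x, b), (x, \<not> b)]) []"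
      unfolding mid by (rule weq_inv_r)
    then have "word_eq (vspg_rels n) (F n s u @ F n ?s1 [(x, b), (x, \<not> b)] @ F n ?s1 v) (F n s u @ [] @ F n ?s1 v)"
      by (rule weq_ctx)
    then show "word_eq (vspg_rels n) (F n s (u @ [(x, b), (x, \<not> b)] @ v)) (F n s (u @ v)) \<and>
               S n s (u @ [(x, b), (x, \<not> b)] @ v) = S n s (u @ v)"
      unfolding F_append3 S_append3 Sm using Sm by (simp only: F_append S_append append_Nil simp_thms)
  qed
next
  case (rel l r u v)
  show ?case
  proof (intro allI impI)
    fix s :: "nat \<Rightarrow> nat" assume s: "s permutes {1..n}"
    let ?s1 = "S n s u"
    have s1: "?s1 permutes {1..n}" by (rule S_permutes[OF s])
    have Sl: "S n ?s1 l = S n ?s1 r"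
      using rel_allok[OF rel] rel_perm[OF rel] by (simp add: S_allok)
    have "word_eq (vspg_rels n) (F n s u @ F n ?s1 l @ F n (S n ?s1 l) v) (F n s u @ F n ?s1 r @ F n (S n ?s1 l) v)"
      by (rule weq_ctx[OF rel_F[OF s1 rel]])
    then show "word_eq (vspg_rels n) (F n s (u @ l @ v)) (F n s (u @ r @ v)) \<and> S n s (u @ l @ v) = S n s (u @ r @ v)"
      using Sl by (simp add: F_append S_append del: F.simps S.simps)
  qed
qed

lemma part3_fwd:
  assumes "\<forall>(x, b) \<in> set u1. pgen_ok n x" "\<forall>(x, b) \<in> set u2. pgen_ok n x"
    and "word_eq (RR n) (wsubst fusing u1) (wsubst fusing u2)"
  shows "word_eq (vspg_rels n) u1 u2"
  using weq_F[OF assms(3)] permutes_id[of "{1..n}"] F_ws_id[OF assms(1)] F_ws_id[OF assms(2)]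
  by metis

section \<open>Reachability of tuples by adjacent transpositions\<close>

lemma tr_range: "lo \<le> k \<Longrightarrow> k < n \<Longrightarrow> x \<in> {lo..n} \<Longrightarrow> tr k x \<in> {lo..n}"
  by (auto simp: transpose_def)

lemma tr_inj: "tr k x = tr k y \<longleftrightarrow> x = y"
  by (metis transpose_involutory)

lemma map_tr_distinct: "distinct (map (tr k) xs) = distinct xs"
  by (simp add: distinct_map inj_on_def tr_inj)

lemma map_tr_tr: "map (tr k) (map (tr k) xs) = xs"
  by (induction xs) auto

lemma reach_head:
  assumes cl: "\<And>k xs. lo \<le> k \<Longrightarrow> k < n \<Longrightarrow> distinct xs \<Longrightarrow> set xs \<subseteq> {lo..n} \<Longrightarrow> Q xs \<Longrightarrow> Q (map (tr k) xs)"
    and base: "\<And>ys. distinct ys \<Longrightarrow> set ys \<subseteq> {Suc lo..n} \<Longrightarrow> length ys = m \<Longrightarrow> Q (lo # ys)"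
  shows "a = lo + d \<Longrightarrow> distinct (a # ys) \<Longrightarrow> set (a # ys) \<subseteq> {lo..n} \<Longrightarrow> length ys = m \<Longrightarrow> Q (a # ys)"
proof (induction d arbitrary: a ys)
  case 0
  then have "set ys \<subseteq> {Suc lo..n}" by (auto simp: subset_iff) (metis atLeastAtMost_iff le_antisym not_less_eq_eq)
  then show ?case using 0 base by auto
next
  case (Suc d)
  let ?k = "a - 1"
  have k: "lo \<le> ?k" "?k < n" using Suc.prems by auto
  have ka: "tr ?k a = a - 1" using Suc.prems by (auto simp: transpose_def)
  let ?zs = "map (tr ?k) (a # ys)"
  have zs: "?zs = (a - 1) # map (tr ?k) ys" using ka by simp
  have dz: "distinct ?zs" using Suc.prems(2) by (simp only: map_tr_distinct)
  have rz: "set ?zs \<subseteq> {lo..n}" using Suc.prems(3) tr_range[OF k] by auto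
  have "Q ?zs" unfolding zs
    by (rule Suc.IH) (use Suc.prems dz rz zs in auto)
  then have "Q (map (tr ?k) ?zs)" using cl[OF k dz rz] by simp
  then show ?case by (simp only: map_tr_tr)
qed

lemma reach:
  assumes "\<And>k xs. lo \<le> k \<Longrightarrow> k < n \<Longrightarrow> distinct xs \<Longrightarrow> set xs \<subseteq> {lo..n} \<Longrightarrow> Q xs \<Longrightarrow> Q (map (tr k) xs)"
    and "Q [lo..<lo + length xs]" and "distinct xs" "set xs \<subseteq> {lo..n}"
  shows "Q xs"
  using assms
proof (induction "length xs" arbitrary: xs lo Q)
  case 0 then show ?case by simp
next
  case (Suc m)
  obtain a ys where xs: "xs = a # ys" using Suc.hyps(2) by (cases xs) auto
  have m: "length ys = m" using Suc.hyps(2) xs by simp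
  have a: "lo \<le> a" using Suc.prems xs by auto
  have base: "Q (lo # ys')" if ys': "distinct ys'" "set ys' \<subseteq> {Suc lo..n}" "length ys' = m" for ys'
  proof -
    let ?Q = "\<lambda>zs. Q (lo # zs)"
    have "?Q ys'"
    proof (rule Suc.hyps(1)[of ys' "Suc lo" ?Q])
      show "m = length ys'" using ys' by simp
      show "\<And>k xs. Suc lo \<le> k \<Longrightarrow> k < n \<Longrightarrow> distinct xs \<Longrightarrow> set xs \<subseteq> {Suc lo..n} \<Longrightarrow> ?Q xs \<Longrightarrow> ?Q (map (tr k) xs)"
      proof -
        fix k xs assume h: "Suc lo \<le> k" "k < n" "distinct xs" "set xs \<subseteq> {Suc lo..n}" "?Q xs"
        have "Q (map (tr k) (lo # xs))"
          by (rule Suc.prems(1)) (use h in \<open>auto simp: subset_iff\<close>)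
        moreover have "tr k lo = lo" using h by (auto simp: transpose_def)
        ultimately show "?Q (map (tr k) xs)" by simp
      qed
      show "?Q [Suc lo..<Suc lo + length ys']"
      proof -
        have e: "lo # [Suc lo..<Suc lo + length ys'] = [lo..<lo + length xs]"
          using xs m ys'(3) by (simp add: upt_conv_Cons del: upt_Suc)
        show ?thesis unfolding e by (rule Suc.prems(2))
      qed
      show "distinct ys'" "set ys' \<subseteq> {Suc lo..n}" using ys' by auto
    qed
    then show ?thesis .
  qed
  show ?case unfolding xs
    by (rule reach_head[OF Suc.prems(1) base, where a=a and d="a - lo" and ys=ys]) (use a xs Suc.prems m in auto)
qed

definition wsP :: "pgen list \<Rightarrow> vgen word" where "wsP gs = concat (map fusing gs)"

lemma wsP_simps[simp]: "wsP [] = []" "wsP (g # gs) = fusing g @ wsP gs" by (simp_all add: wsP_def)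

lemma conj_list:
  assumes "\<forall>g\<in>set gs. pgen_ok n g" "1 \<le> k" "k < n"
  shows "word_eq (RR n) (wsP (map (rl (tr k)) gs)) ([vl k] @ wsP gs @ [vl k])"
  using assms(1)
proof (induction gs)
  case Nil
  show ?case by simp (rule weq_sym, rule vw_sq[where k=k and u="[]" and v="[]"], use assms in simp_all)
next
  case (Cons g gs)
  have "word_eq (RR n) (wsP (map (rl (tr k)) (g # gs))) (([vl k] @ fusing g @ [vl k]) @ ([vl k] @ wsP gs @ [vl k]))"
    using weq_app[OF weq_sym[OF conj1[of n g k]] Cons.IH] Cons.prems assms by simp
  also have "word_eq (RR n) \<dots> (([vl k] @ fusing g) @ (wsP gs @ [vl k]))"
    by (rule vw_sq[where k=k and u="[vl k] @ fusing g" and v="wsP gs @ [vl k]"]) (use assms in simp_all)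
  finally show ?case by simp
qed

lemma distinct_len: "distinct xs \<Longrightarrow> set xs \<subseteq> {1..n} \<Longrightarrow> length xs \<le> n"
  using card_mono[of "{1..n}" "set xs"] distinct_card[of xs] by simp

lemma fam_reach:
  assumes h1: "\<And>t xs. length xs = m \<Longrightarrow> Lf (map t xs) = map (rl t) (Lf xs) \<and> Rf (map t xs) = map (rl t) (Rf xs)"
    and h2: "\<And>xs. distinct xs \<Longrightarrow> set xs \<subseteq> {1..n} \<Longrightarrow> length xs = m \<Longrightarrow>
               (\<forall>g\<in>set (Lf xs). pgen_ok n g) \<and> (\<forall>g\<in>set (Rf xs). pgen_ok n g)"
    and base: "m \<le> n \<Longrightarrow> word_eq (RR n) (wsP (Lf [1..<1 + m])) (wsP (Rf [1..<1 + m]))"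
    and xs: "distinct xs" "set xs \<subseteq> {1..n}" "length xs = m"
  shows "word_eq (RR n) (wsP (Lf xs)) (wsP (Rf xs))"
proof -
  let ?Q = "\<lambda>xs. length xs = m \<longrightarrow> word_eq (RR n) (wsP (Lf xs)) (wsP (Rf xs))"
  have "?Q xs"
  proof (rule reach[where lo=1])
    show "?Q (map (tr k) ys)" if k: "1 \<le> k" "k < n" "distinct ys" "set ys \<subseteq> {1..n}" "?Q ys" for k ys
    proof
      assume len: "length (map (tr k) ys) = m"
      then have len': "length ys = m" by simp
      have ok: "(\<forall>g\<in>set (Lf ys). pgen_ok n g) \<and> (\<forall>g\<in>set (Rf ys). pgen_ok n g)" using h2 k len' by blast
      have "word_eq (RR n) (wsP (Lf (map (tr k) ys))) ([vl k] @ wsP (Lf ys) @ [vl k])"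
        using conj_list[of "Lf ys" n k] h1[OF len'] ok k by simp
      also have "word_eq (RR n) \<dots> ([vl k] @ wsP (Rf ys) @ [vl k])"
        by (rule weq_ctx) (use k len' in simp)
      also have "word_eq (RR n) \<dots> (wsP (Rf (map (tr k) ys)))"
        using weq_sym[OF conj_list[of "Rf ys" n k]] h1[OF len'] ok k by simp
      finally show "word_eq (RR n) (wsP (Lf (map (tr k) ys))) (wsP (Rf (map (tr k) ys)))" .
    qed
    show "?Q [1..<1 + length xs]" using base xs distinct_len[OF xs(1,2)] by simp
  qed (use xs in auto)
  then show ?thesis using xs by simp
qed

lemma fus_vals:
  "fusing (Mu 1 2) = [cl Sig 1, vl 1]" "fusing (Mu 2 3) = [cl Sig 2, vl 2]"
  "fusing (Mu 1 3) = [vl 2, cl Sig 1, vl 1, vl 2]"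
  "fusing (Gam 1 2) = [cl Tau 1, vl 1]" "fusing (Gam 2 3) = [cl Tau 2, vl 2]"
  "fusing (Mu 2 1) = [vl 1, cl Sig 1, vl 1, vl 1]" "fusing (Gam 2 1) = [vl 1, cl Tau 1, vl 1, vl 1]"
  "fusing (Mu 3 4) = [cl Sig 3, vl 3]" "fusing (Gam 3 4) = [cl Tau 3, vl 3]"
  by (simp_all add: vdown_def vup_def upt_rec)

context
  fixes n :: nat
  assumes n3: "3 \<le> n"
begin

lemma L12: "c = Sig \<or> c = Tau \<Longrightarrow> word_eq (RR n) [vl 1, vl 2, cl c 1] [cl c 2, vl 1, vl 2]"
proof -
  assume c: "c = Sig \<or> c = Tau"
  have "word_eq (RR n) [vl 1, vl 2, cl c 1] [vl 1, vl 2, cl c 1, vl 2, vl 2]"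
    by (rule weq_sym, rule vw_sq[where k=2 and u="[vl 1, vl 2, cl c 1]" and v="[]"]) (use n3 in simp_all)
  also have "word_eq (RR n) \<dots> [vl 1, vl 1, cl c 2, vl 1, vl 2]"
    by (rule weq_rw[OF vsg_vcv[OF c, of 2 n 1], where u="[vl 1]" and v="[vl 2]"]) (use n3 in \<open>simp_all add: adj_def\<close>)
  also have "word_eq (RR n) \<dots> [cl c 2, vl 1, vl 2]"
    by (rule vw_sq[where k=1 and u="[]" and v="[cl c 2, vl 1, vl 2]"]) (use n3 in simp_all)
  finally show ?thesis .
qed

lemma L21: "c = Sig \<or> c = Tau \<Longrightarrow> word_eq (RR n) [vl 2, vl 1, cl c 2] [cl c 1, vl 2, vl 1]"
proof -
  assume c: "c = Sig \<or> c = Tau"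
  have "word_eq (RR n) [vl 2, vl 1, cl c 2] [vl 2, vl 1, cl c 2, vl 1, vl 1]"
    by (rule weq_sym, rule vw_sq[where k=1 and u="[vl 2, vl 1, cl c 2]" and v="[]"]) (use n3 in simp_all)
  also have "word_eq (RR n) \<dots> [vl 2, vl 2, cl c 1, vl 2, vl 1]"
    by (rule weq_rw[OF vsg_vcv[OF c, of 1 n 2], where u="[vl 2]" and v="[vl 1]"]) (use n3 in \<open>simp_all add: adj_def\<close>)
  also have "word_eq (RR n) \<dots> [cl c 1, vl 2, vl 1]"
    by (rule vw_sq[where k=2 and u="[]" and v="[cl c 1, vl 2, vl 1]"]) (use n3 in simp_all)
  finally show ?thesis .
qed

lemma X: "c = Sig \<or> c = Tau \<Longrightarrow>
  word_eq (RR n) [cl e 1, vl 1, vl 2, cl Sig 1, vl 1, vl 2, cl c 2, vl 2] [cl e 1, cl Sig 2, cl c 1, vl 2, vl 1, vl 2]"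
proof -
  assume c: "c = Sig \<or> c = Tau"
  have "word_eq (RR n) [cl e 1, vl 1, vl 2, cl Sig 1, vl 1, vl 2, cl c 2, vl 2] [cl e 1, cl Sig 2, vl 1, vl 2, vl 1, vl 2, cl c 2, vl 2]"
    by (rule weq_rw[OF L12[of Sig], where u="[cl e 1]" and v="[vl 1, vl 2, cl c 2, vl 2]"]) simp_all
  also have "word_eq (RR n) \<dots> [cl e 1, cl Sig 2, vl 2, vl 1, vl 2, vl 2, cl c 2, vl 2]"
    by (rule weq_rw[OF vsg_vbraid[of 1 n 2], where u="[cl e 1, cl Sig 2]" and v="[vl 2, cl c 2, vl 2]"]) (use n3 in \<open>simp_all add: adj_def\<close>)
  also have "word_eq (RR n) \<dots> [cl e 1, cl Sig 2, vl 2, vl 1, cl c 2, vl 2]"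
    by (rule vw_sq[where k=2 and u="[cl e 1, cl Sig 2, vl 2, vl 1]" and v="[cl c 2, vl 2]"]) (use n3 in simp_all)
  also have "word_eq (RR n) \<dots> [cl e 1, cl Sig 2, cl c 1, vl 2, vl 1, vl 2]"
    by (rule weq_rw[OF L21[OF c], where u="[cl e 1, cl Sig 2]" and v="[vl 2]"]) simp_all
  finally show ?thesis .
qed

lemma Y: "c = Sig \<or> c = Tau \<Longrightarrow>
  word_eq (RR n) [cl d 2, vl 2, vl 2, cl Sig 1, vl 1, vl 2, cl c 1, vl 1] [cl d 2, cl Sig 1, cl c 2, vl 1, vl 2, vl 1]"
proof -
  assume c: "c = Sig \<or> c = Tau"
  have "word_eq (RR n) [cl d 2, vl 2, vl 2, cl Sig 1, vl 1, vl 2, cl c 1, vl 1] [cl d 2, cl Sig 1, vl 1, vl 2, cl c 1, vl 1]"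
    by (rule vw_sq[where k=2 and u="[cl d 2]" and v="[cl Sig 1, vl 1, vl 2, cl c 1, vl 1]"]) (use n3 in simp_all)
  also have "word_eq (RR n) \<dots> [cl d 2, cl Sig 1, cl c 2, vl 1, vl 2, vl 1]"
    by (rule weq_rw[OF L12[OF c], where u="[cl d 2, cl Sig 1]" and v="[vl 1]"]) simp_all
  finally show ?thesis .
qed

lemma vb_end: "word_eq (RR n) (u @ [vl 2, vl 1, vl 2]) (u @ [vl 1, vl 2, vl 1])"
  by (rule weq_rw[OF vsg_vbraid[of 2 n 1], where u=u and v="[]"]) (use n3 in \<open>simp_all add: adj_def\<close>)

lemma B1: "word_eq (RR n) (wsP [Mu 1 2, Mu 1 3, Mu 2 3]) (wsP [Mu 2 3, Mu 1 3, Mu 1 2])"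
proof -
  have "word_eq (RR n) (wsP [Mu 1 2, Mu 1 3, Mu 2 3]) [cl Sig 1, cl Sig 2, cl Sig 1, vl 2, vl 1, vl 2]"
    using X[of Sig Sig] by (simp add: vdown_def vup_def upt_rec numeral_2_eq_2 numeral_3_eq_3)
  also have "word_eq (RR n) \<dots> [cl Sig 2, cl Sig 1, cl Sig 2, vl 2, vl 1, vl 2]"
    by (rule weq_rw[OF vsg_sbraid[of 1 n 2], where u="[]" and v="[vl 2, vl 1, vl 2]"]) (use n3 in \<open>simp_all add: adj_def\<close>)
  also have "word_eq (RR n) \<dots> [cl Sig 2, cl Sig 1, cl Sig 2, vl 1, vl 2, vl 1]"
    using vb_end[of "[cl Sig 2, cl Sig 1, cl Sig 2]"] by simp
  also have "word_eq (RR n) \<dots> (wsP [Mu 2 3, Mu 1 3, Mu 1 2])"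
    using weq_sym[OF Y[of Sig Sig]] by (simp add: vdown_def vup_def upt_rec numeral_2_eq_2 numeral_3_eq_3)
  finally show ?thesis .
qed

lemma B2: "word_eq (RR n) (wsP [Mu 1 2, Mu 1 3, Gam 2 3]) (wsP [Gam 2 3, Mu 1 3, Mu 1 2])"
proof -
  have "word_eq (RR n) (wsP [Mu 1 2, Mu 1 3, Gam 2 3]) [cl Sig 1, cl Sig 2, cl Tau 1, vl 2, vl 1, vl 2]"
    using X[of Tau Sig] by (simp add: vdown_def vup_def upt_rec numeral_2_eq_2 numeral_3_eq_3)
  also have "word_eq (RR n) \<dots> [cl Tau 2, cl Sig 1, cl Sig 2, vl 2, vl 1, vl 2]"
    by (rule weq_rw[OF vsg_sst[of 1 n 2], where u="[]" and v="[vl 2, vl 1, vl 2]"]) (use n3 in \<open>simp_all add: adj_def\<close>)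
  also have "word_eq (RR n) \<dots> [cl Tau 2, cl Sig 1, cl Sig 2, vl 1, vl 2, vl 1]"
    using vb_end[of "[cl Tau 2, cl Sig 1, cl Sig 2]"] by simp
  also have "word_eq (RR n) \<dots> (wsP [Gam 2 3, Mu 1 3, Mu 1 2])"
    using weq_sym[OF Y[of Sig Tau]] by (simp add: vdown_def vup_def upt_rec numeral_2_eq_2 numeral_3_eq_3)
  finally show ?thesis .
qed

lemma B3: "word_eq (RR n) (wsP [Gam 1 2, Mu 1 3, Mu 2 3]) (wsP [Mu 2 3, Mu 1 3, Gam 1 2])"
proof -
  have "word_eq (RR n) (wsP [Gam 1 2, Mu 1 3, Mu 2 3]) [cl Tau 1, cl Sig 2, cl Sig 1, vl 2, vl 1, vl 2]"
    using X[of Sig Tau] by (simp add: vdown_def vup_def upt_rec numeral_2_eq_2 numeral_3_eq_3)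
  also have "word_eq (RR n) \<dots> [cl Sig 2, cl Sig 1, cl Tau 2, vl 2, vl 1, vl 2]"
    by (rule weq_rw_back[OF vsg_sst[of 2 n 1], where u="[]" and v="[vl 2, vl 1, vl 2]"]) (use n3 in \<open>simp_all add: adj_def\<close>)
  also have "word_eq (RR n) \<dots> [cl Sig 2, cl Sig 1, cl Tau 2, vl 1, vl 2, vl 1]"
    using vb_end[of "[cl Sig 2, cl Sig 1, cl Tau 2]"] by simp
  also have "word_eq (RR n) \<dots> (wsP [Mu 2 3, Mu 1 3, Gam 1 2])"
    using weq_sym[OF Y[of Tau Sig]] by (simp add: vdown_def vup_def upt_rec numeral_2_eq_2 numeral_3_eq_3)
  finally show ?thesis .
qed

end

lemma B4: "2 \<le> n \<Longrightarrow> word_eq (RR n) (wsP [Mu 1 2, Gam 2 1]) (wsP [Gam 1 2, Mu 2 1])"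
proof -
  assume n: "2 \<le> n"
  have sq: "word_eq (RR n) [cl a 1, vl 1, vl 1, cl b 1, vl 1, vl 1] [cl a 1, cl b 1]" for a b
  proof -
    have "word_eq (RR n) [cl a 1, vl 1, vl 1, cl b 1, vl 1, vl 1] [cl a 1, cl b 1, vl 1, vl 1]"
      by (rule vw_sq[where k=1 and u="[cl a 1]" and v="[cl b 1, vl 1, vl 1]"]) (use n in simp_all)
    also have "word_eq (RR n) \<dots> [cl a 1, cl b 1]"
      by (rule vw_sq[where k=1 and u="[cl a 1, cl b 1]" and v="[]"]) (use n in simp_all)
    finally show ?thesis .
  qed
  have "word_eq (RR n) (wsP [Mu 1 2, Gam 2 1]) [cl Sig 1, cl Tau 1]"
    using sq[of Sig Tau] by (simp add: vdown_def vup_def upt_rec numeral_2_eq_2 numeral_3_eq_3)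
  also have "word_eq (RR n) \<dots> [cl Tau 1, cl Sig 1]"
    by (rule vsg_st) (use n in simp_all)
  also have "word_eq (RR n) \<dots> (wsP [Gam 1 2, Mu 2 1])"
    using weq_sym[OF sq[of Tau Sig]] by (simp add: vdown_def vup_def upt_rec numeral_2_eq_2 numeral_3_eq_3)
  finally show ?thesis .
qed

lemma B567: "4 \<le> n \<Longrightarrow> c = Sig \<or> c = Tau \<Longrightarrow> d = Sig \<or> d = Tau \<Longrightarrow>
  word_eq (RR n) [cl c 1, vl 1, cl d 3, vl 3] [cl d 3, vl 3, cl c 1, vl 1]"
proof -
  assume n: "4 \<le> n" and c: "c = Sig \<or> c = Tau" and d: "d = Sig \<or> d = Tau"
  have "word_eq (RR n) ([cl c 1] @ [vl 1] @ [cl d 3, vl 3] @ []) ([cl c 1] @ [cl d 3, vl 3] @ [vl 1] @ [])"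
    by (rule far_list_gen[where x="V 1" and L="[cl d 3, vl 3]" and u="[cl c 1]" and v="[]"]) (use n c d in \<open>auto simp: vgen_ok_def far_def\<close>)
  also have "word_eq (RR n) \<dots> ([] @ [cl d 3, vl 3] @ [cl c 1] @ [vl 1])"
    by (rule far_list_gen[where x="c 1" and L="[cl d 3, vl 3]" and u="[]" and v="[vl 1]"]) (use n c d in \<open>auto simp: vgen_ok_def far_def\<close>)
  finally show ?thesis by simp
qed

lemma upt3: "[1..<1 + 3] = [1, 2, 3::nat]" by (simp add: upt_rec)
lemma upt2: "[1..<1 + 2] = [1, 2::nat]" by (simp add: upt_rec)
lemma upt4: "[1..<1 + 4] = [1, 2, 3, 4::nat]" by (simp add: upt_rec)

lemma l3_facts: "distinct xs \<Longrightarrow> set xs \<subseteq> {1..n} \<Longrightarrow> length xs = 3 \<Longrightarrow>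
  (\<forall>i<3. 1 \<le> xs ! i \<and> xs ! i \<le> n) \<and> xs ! 0 \<noteq> xs ! 1 \<and> xs ! 0 \<noteq> xs ! 2 \<and> xs ! 1 \<noteq> xs ! 2"
  by (auto simp: nth_eq_iff_index_eq subset_iff dest!: nth_mem)

lemma l2_facts: "distinct xs \<Longrightarrow> set xs \<subseteq> {1..n} \<Longrightarrow> length xs = 2 \<Longrightarrow>
  (\<forall>i<2. 1 \<le> xs ! i \<and> xs ! i \<le> n) \<and> xs ! 0 \<noteq> xs ! 1"
  by (auto simp: nth_eq_iff_index_eq subset_iff dest!: nth_mem)

lemma l4_facts: "distinct xs \<Longrightarrow> set xs \<subseteq> {1..n} \<Longrightarrow> length xs = 4 \<Longrightarrow>
  (\<forall>i<4. 1 \<le> xs ! i \<and> xs ! i \<le> n) \<and> xs ! 0 \<noteq> xs ! 1 \<and> xs ! 2 \<noteq> xs ! 3"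
  by (auto simp: nth_eq_iff_index_eq subset_iff dest!: nth_mem)

lemma all3: "(\<forall>i<3. P i) \<longleftrightarrow> P 0 \<and> P 1 \<and> P (2::nat)"
  by (auto simp: less_Suc_eq numeral_3_eq_3 numeral_2_eq_2)
lemma all2: "(\<forall>i<2. P i) \<longleftrightarrow> P 0 \<and> P (1::nat)"
  by (auto simp: less_Suc_eq numeral_2_eq_2)
lemma all4: "(\<forall>i<4. P i) \<longleftrightarrow> P 0 \<and> P 1 \<and> P 2 \<and> P (3::nat)"
  by (auto simp: less_Suc_eq eval_nat_numeral)

lemma fam1:
  assumes "distinct [i, j, k]" "set [i, j, k] \<subseteq> {1..n}"
  shows "word_eq (RR n) (wsP [Mu i j, Mu i k, Mu j k]) (wsP [Mu j k, Mu i k, Mu i j])"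
proof -
  have "word_eq (RR n) (wsP ((\<lambda>xs. [Mu (xs!0) (xs!1), Mu (xs!0) (xs!2), Mu (xs!1) (xs!2)]) [i, j, k]))
      (wsP ((\<lambda>xs. [Mu (xs!1) (xs!2), Mu (xs!0) (xs!2), Mu (xs!0) (xs!1)]) [i, j, k]))"
  proof (rule fam_reach[where m=3])
    show "\<And>xs. distinct xs \<Longrightarrow> set xs \<subseteq> {1..n} \<Longrightarrow> length xs = 3 \<Longrightarrow>
      (\<forall>g\<in>set [Mu (xs!0) (xs!1), Mu (xs!0) (xs!2), Mu (xs!1) (xs!2)]. pgen_ok n g) \<and>
      (\<forall>g\<in>set [Mu (xs!1) (xs!2), Mu (xs!0) (xs!2), Mu (xs!0) (xs!1)]. pgen_ok n g)"
      by (drule (2) l3_facts) (auto simp: all3)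
    show "3 \<le> n \<Longrightarrow> word_eq (RR n) (wsP [Mu ([1..<1 + 3]!0) ([1..<1 + 3]!1), Mu ([1..<1 + 3]!0) ([1..<1 + 3]!2), Mu ([1..<1 + 3]!1) ([1..<1 + 3]!2)])
      (wsP [Mu ([1..<1 + 3]!1) ([1..<1 + 3]!2), Mu ([1..<1 + 3]!0) ([1..<1 + 3]!2), Mu ([1..<1 + 3]!0) ([1..<1 + 3]!1)])"
      unfolding upt3 using B1 by simp
  qed (use assms in auto)
  then show ?thesis by simp
qed


lemma fam2:
  assumes "distinct [i, j, k]" "set [i, j, k] \<subseteq> {1..n}"
  shows "word_eq (RR n) (wsP [Mu i j, Mu i k, Gam j k]) (wsP [Gam j k, Mu i k, Mu i j])"
proof -
  have "word_eq (RR n) (wsP ((\<lambda>xs. [Mu (xs!0) (xs!1), Mu (xs!0) (xs!2), Gam (xs!1) (xs!2)]) [i, j, k])) (wsP ((\<lambda>xs. [Gam (xs!1) (xs!2), Mu (xs!0) (xs!2), Mu (xs!0) (xs!1)]) [i, j, k]))"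
  proof (rule fam_reach[where m=3])
    show "\<And>xs. distinct xs \<Longrightarrow> set xs \<subseteq> {1..n} \<Longrightarrow> length xs = 3 \<Longrightarrow>
      (\<forall>g\<in>set [Mu (xs!0) (xs!1), Mu (xs!0) (xs!2), Gam (xs!1) (xs!2)]. pgen_ok n g) \<and> (\<forall>g\<in>set [Gam (xs!1) (xs!2), Mu (xs!0) (xs!2), Mu (xs!0) (xs!1)]. pgen_ok n g)"
      by (drule (2) l3_facts) (auto simp: all3)
    show "3 \<le> n \<Longrightarrow> word_eq (RR n) (wsP [Mu ([1..<1 + 3]!0) ([1..<1 + 3]!1), Mu ([1..<1 + 3]!0) ([1..<1 + 3]!2), Gam ([1..<1 + 3]!1) ([1..<1 + 3]!2)]) (wsP [Gam ([1..<1 + 3]!1) ([1..<1 + 3]!2), Mu ([1..<1 + 3]!0) ([1..<1 + 3]!2), Mu ([1..<1 + 3]!0) ([1..<1 + 3]!1)])"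
      unfolding upt3 using B2 by simp
  qed (use assms in auto)
  then show ?thesis by simp
qed

lemma fam3:
  assumes "distinct [i, j, k]" "set [i, j, k] \<subseteq> {1..n}"
  shows "word_eq (RR n) (wsP [Gam i j, Mu i k, Mu j k]) (wsP [Mu j k, Mu i k, Gam i j])"
proof -
  have "word_eq (RR n) (wsP ((\<lambda>xs. [Gam (xs!0) (xs!1), Mu (xs!0) (xs!2), Mu (xs!1) (xs!2)]) [i, j, k])) (wsP ((\<lambda>xs. [Mu (xs!1) (xs!2), Mu (xs!0) (xs!2), Gam (xs!0) (xs!1)]) [i, j, k]))"
  proof (rule fam_reach[where m=3])
    show "\<And>xs. distinct xs \<Longrightarrow> set xs \<subseteq> {1..n} \<Longrightarrow> length xs = 3 \<Longrightarrow>
      (\<forall>g\<in>set [Gam (xs!0) (xs!1), Mu (xs!0) (xs!2), Mu (xs!1) (xs!2)]. pgen_ok n g) \<and> (\<forall>g\<in>set [Mu (xs!1) (xs!2), Mu (xs!0) (xs!2), Gam (xs!0) (xs!1)]. pgen_ok n g)"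
      by (drule (2) l3_facts) (auto simp: all3)
    show "3 \<le> n \<Longrightarrow> word_eq (RR n) (wsP [Gam ([1..<1 + 3]!0) ([1..<1 + 3]!1), Mu ([1..<1 + 3]!0) ([1..<1 + 3]!2), Mu ([1..<1 + 3]!1) ([1..<1 + 3]!2)]) (wsP [Mu ([1..<1 + 3]!1) ([1..<1 + 3]!2), Mu ([1..<1 + 3]!0) ([1..<1 + 3]!2), Gam ([1..<1 + 3]!0) ([1..<1 + 3]!1)])"
      unfolding upt3 using B3 by simp
  qed (use assms in auto)
  then show ?thesis by simp
qed

lemma fam4:
  assumes "distinct [i, j]" "set [i, j] \<subseteq> {1..n}"
  shows "word_eq (RR n) (wsP [Mu i j, Gam j i]) (wsP [Gam i j, Mu j i])"
proof -
  have "word_eq (RR n) (wsP ((\<lambda>xs. [Mu (xs!0) (xs!1), Gam (xs!1) (xs!0)]) [i, j])) (wsP ((\<lambda>xs. [Gam (xs!0) (xs!1), Mu (xs!1) (xs!0)]) [i, j]))"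
  proof (rule fam_reach[where m=2])
    show "\<And>xs. distinct xs \<Longrightarrow> set xs \<subseteq> {1..n} \<Longrightarrow> length xs = 2 \<Longrightarrow>
      (\<forall>g\<in>set [Mu (xs!0) (xs!1), Gam (xs!1) (xs!0)]. pgen_ok n g) \<and> (\<forall>g\<in>set [Gam (xs!0) (xs!1), Mu (xs!1) (xs!0)]. pgen_ok n g)"
      by (drule (2) l2_facts) (auto simp: all2)
    show "2 \<le> n \<Longrightarrow> word_eq (RR n) (wsP [Mu ([1..<1 + 2]!0) ([1..<1 + 2]!1), Gam ([1..<1 + 2]!1) ([1..<1 + 2]!0)]) (wsP [Gam ([1..<1 + 2]!0) ([1..<1 + 2]!1), Mu ([1..<1 + 2]!1) ([1..<1 + 2]!0)])"
      unfolding upt2 using B4 by simp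
  qed (use assms in auto)
  then show ?thesis by simp
qed

lemma fam5:
  assumes "distinct [i, j, k, l]" "set [i, j, k, l] \<subseteq> {1..n}"
  shows "word_eq (RR n) (wsP [Mu i j, Mu k l]) (wsP [Mu k l, Mu i j])"
proof -
  have "word_eq (RR n) (wsP ((\<lambda>xs. [Mu (xs!0) (xs!1), Mu (xs!2) (xs!3)]) [i, j, k, l])) (wsP ((\<lambda>xs. [Mu (xs!2) (xs!3), Mu (xs!0) (xs!1)]) [i, j, k, l]))"
  proof (rule fam_reach[where m=4])
    show "\<And>xs. distinct xs \<Longrightarrow> set xs \<subseteq> {1..n} \<Longrightarrow> length xs = 4 \<Longrightarrow>
      (\<forall>g\<in>set [Mu (xs!0) (xs!1), Mu (xs!2) (xs!3)]. pgen_ok n g) \<and> (\<forall>g\<in>set [Mu (xs!2) (xs!3), Mu (xs!0) (xs!1)]. pgen_ok n g)"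
      by (drule (2) l4_facts) (auto simp: all4)
    show "4 \<le> n \<Longrightarrow> word_eq (RR n) (wsP [Mu ([1..<1 + 4]!0) ([1..<1 + 4]!1), Mu ([1..<1 + 4]!2) ([1..<1 + 4]!3)]) (wsP [Mu ([1..<1 + 4]!2) ([1..<1 + 4]!3), Mu ([1..<1 + 4]!0) ([1..<1 + 4]!1)])"
      unfolding upt4 using B567[of n Sig Sig] by (simp add: vdown_empty vup_empty)
  qed (use assms in auto)
  then show ?thesis by simp
qed

lemma fam6:
  assumes "distinct [i, j, k, l]" "set [i, j, k, l] \<subseteq> {1..n}"
  shows "word_eq (RR n) (wsP [Gam i j, Gam k l]) (wsP [Gam k l, Gam i j])"
proof -
  have "word_eq (RR n) (wsP ((\<lambda>xs. [Gam (xs!0) (xs!1), Gam (xs!2) (xs!3)]) [i, j, k, l])) (wsP ((\<lambda>xs. [Gam (xs!2) (xs!3), Gam (xs!0) (xs!1)]) [i, j, k, l]))"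
  proof (rule fam_reach[where m=4])
    show "\<And>xs. distinct xs \<Longrightarrow> set xs \<subseteq> {1..n} \<Longrightarrow> length xs = 4 \<Longrightarrow>
      (\<forall>g\<in>set [Gam (xs!0) (xs!1), Gam (xs!2) (xs!3)]. pgen_ok n g) \<and> (\<forall>g\<in>set [Gam (xs!2) (xs!3), Gam (xs!0) (xs!1)]. pgen_ok n g)"
      by (drule (2) l4_facts) (auto simp: all4)
    show "4 \<le> n \<Longrightarrow> word_eq (RR n) (wsP [Gam ([1..<1 + 4]!0) ([1..<1 + 4]!1), Gam ([1..<1 + 4]!2) ([1..<1 + 4]!3)]) (wsP [Gam ([1..<1 + 4]!2) ([1..<1 + 4]!3), Gam ([1..<1 + 4]!0) ([1..<1 + 4]!1)])"
      unfolding upt4 using B567[of n Tau Tau] by (simp add: vdown_empty vup_empty)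
  qed (use assms in auto)
  then show ?thesis by simp
qed

lemma fam7:
  assumes "distinct [i, j, k, l]" "set [i, j, k, l] \<subseteq> {1..n}"
  shows "word_eq (RR n) (wsP [Mu i j, Gam k l]) (wsP [Gam k l, Mu i j])"
proof -
  have "word_eq (RR n) (wsP ((\<lambda>xs. [Mu (xs!0) (xs!1), Gam (xs!2) (xs!3)]) [i, j, k, l])) (wsP ((\<lambda>xs. [Gam (xs!2) (xs!3), Mu (xs!0) (xs!1)]) [i, j, k, l]))"
  proof (rule fam_reach[where m=4])
    show "\<And>xs. distinct xs \<Longrightarrow> set xs \<subseteq> {1..n} \<Longrightarrow> length xs = 4 \<Longrightarrow>
      (\<forall>g\<in>set [Mu (xs!0) (xs!1), Gam (xs!2) (xs!3)]. pgen_ok n g) \<and> (\<forall>g\<in>set [Gam (xs!2) (xs!3), Mu (xs!0) (xs!1)]. pgen_ok n g)"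
      by (drule (2) l4_facts) (auto simp: all4)
    show "4 \<le> n \<Longrightarrow> word_eq (RR n) (wsP [Mu ([1..<1 + 4]!0) ([1..<1 + 4]!1), Gam ([1..<1 + 4]!2) ([1..<1 + 4]!3)]) (wsP [Gam ([1..<1 + 4]!2) ([1..<1 + 4]!3), Mu ([1..<1 + 4]!0) ([1..<1 + 4]!1)])"
      unfolding upt4 using B567[of n Sig Tau] by (simp add: vdown_empty vup_empty)
  qed (use assms in auto)
  then show ?thesis by simp
qed

lemma g1:
  assumes "(lL, rR) \<in> {([pos (Mu i j), pos (Mu i k), pos (Mu j k)], [pos (Mu j k), pos (Mu i k), pos (Mu i j)])        | i j k. i \<in> {1..n} \<and> j \<in> {1..n} \<and> k \<in> {1..n} \<and> distinct [i, j, k]}"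
  shows "word_eq (RR n) (wsubst fusing lL) (wsubst fusing rR)"
proof -
  obtain i j k where h: "(lL, rR) = ([pos (Mu i j), pos (Mu i k), pos (Mu j k)], [pos (Mu j k), pos (Mu i k), pos (Mu i j)])" "i \<in> {1..n} \<and> j \<in> {1..n} \<and> k \<in> {1..n} \<and> distinct [i, j, k]"
    using assms by blast
  show ?thesis using fam1[of i j k n] h by (simp add: wsP_def)
qed

lemma g2:
  assumes "(lL, rR) \<in> {([pos (Mu i j), pos (Mu i k), pos (Gam j k)], [pos (Gam j k), pos (Mu i k), pos (Mu i j)])        | i j k. i \<in> {1..n} \<and> j \<in> {1..n} \<and> k \<in> {1..n} \<and> distinct [i, j, k]}"
  shows "word_eq (RR n) (wsubst fusing lL) (wsubst fusing rR)"
proof -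
  obtain i j k where h: "(lL, rR) = ([pos (Mu i j), pos (Mu i k), pos (Gam j k)], [pos (Gam j k), pos (Mu i k), pos (Mu i j)])" "i \<in> {1..n} \<and> j \<in> {1..n} \<and> k \<in> {1..n} \<and> distinct [i, j, k]"
    using assms by blast
  show ?thesis using fam2[of i j k n] h by (simp add: wsP_def)
qed

lemma g3:
  assumes "(lL, rR) \<in> {([pos (Gam i j), pos (Mu i k), pos (Mu j k)], [pos (Mu j k), pos (Mu i k), pos (Gam i j)])        | i j k. i \<in> {1..n} \<and> j \<in> {1..n} \<and> k \<in> {1..n} \<and> distinct [i, j, k]}"
  shows "word_eq (RR n) (wsubst fusing lL) (wsubst fusing rR)"
proof -
  obtain i j k where h: "(lL, rR) = ([pos (Gam i j), pos (Mu i k), pos (Mu j k)], [pos (Mu j k), pos (Mu i k), pos (Gam i j)])" "i \<in> {1..n} \<and> j \<in> {1..n} \<and> k \<in> {1..n} \<and> distinct [i, j, k]"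
    using assms by blast
  show ?thesis using fam3[of i j k n] h by (simp add: wsP_def)
qed

lemma g4:
  assumes "(lL, rR) \<in> {([pos (Mu i j), pos (Gam j i)], [pos (Gam i j), pos (Mu j i)])        | i j. i \<in> {1..n} \<and> j \<in> {1..n} \<and> i \<noteq> j}"
  shows "word_eq (RR n) (wsubst fusing lL) (wsubst fusing rR)"
proof -
  obtain i j where h: "(lL, rR) = ([pos (Mu i j), pos (Gam j i)], [pos (Gam i j), pos (Mu j i)])" "i \<in> {1..n} \<and> j \<in> {1..n} \<and> i \<noteq> j"
    using assms by blast
  show ?thesis using fam4[of i j n] h by (simp add: wsP_def)
qed

lemma g5:
  assumes "(lL, rR) \<in> {([pos (Mu i j), pos (Mu k l)], [pos (Mu k l), pos (Mu i j)])        | i j k l. i \<in> {1..n} \<and> j \<in> {1..n} \<and> k \<in> {1..n} \<and> l \<in> {1..n} \<and> distinct [i, j, k, l]}"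
  shows "word_eq (RR n) (wsubst fusing lL) (wsubst fusing rR)"
proof -
  obtain i j k l where h: "(lL, rR) = ([pos (Mu i j), pos (Mu k l)], [pos (Mu k l), pos (Mu i j)])" "i \<in> {1..n} \<and> j \<in> {1..n} \<and> k \<in> {1..n} \<and> l \<in> {1..n} \<and> distinct [i, j, k, l]"
    using assms by blast
  show ?thesis using fam5[of i j k l n] h by (simp add: wsP_def)
qed

lemma g6:
  assumes "(lL, rR) \<in> {([pos (Gam i j), pos (Gam k l)], [pos (Gam k l), pos (Gam i j)])        | i j k l. i \<in> {1..n} \<and> j \<in> {1..n} \<and> k \<in> {1..n} \<and> l \<in> {1..n} \<and> distinct [i, j, k, l]}"
  shows "word_eq (RR n) (wsubst fusing lL) (wsubst fusing rR)"
proof -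
  obtain i j k l where h: "(lL, rR) = ([pos (Gam i j), pos (Gam k l)], [pos (Gam k l), pos (Gam i j)])" "i \<in> {1..n} \<and> j \<in> {1..n} \<and> k \<in> {1..n} \<and> l \<in> {1..n} \<and> distinct [i, j, k, l]"
    using assms by blast
  show ?thesis using fam6[of i j k l n] h by (simp add: wsP_def)
qed

lemma g7:
  assumes "(lL, rR) \<in> {([pos (Mu i j), pos (Gam k l)], [pos (Gam k l), pos (Mu i j)])        | i j k l. i \<in> {1..n} \<and> j \<in> {1..n} \<and> k \<in> {1..n} \<and> l \<in> {1..n} \<and> distinct [i, j, k, l]}"
  shows "word_eq (RR n) (wsubst fusing lL) (wsubst fusing rR)"
proof -
  obtain i j k l where h: "(lL, rR) = ([pos (Mu i j), pos (Gam k l)], [pos (Gam k l), pos (Mu i j)])" "i \<in> {1..n} \<and> j \<in> {1..n} \<and> k \<in> {1..n} \<and> l \<in> {1..n} \<and> distinct [i, j, k, l]"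
    using assms by blast
  show ?thesis using fam7[of i j k l n] h by (simp add: wsP_def)
qed

lemma vspg_to_vsg: "(lL, rR) \<in> vspg_rels n \<Longrightarrow> word_eq (RR n) (wsubst fusing lL) (wsubst fusing rR)"
  unfolding vspg_rels_def
  apply (elim UnE)
  apply (erule g1)
  apply (erule g2)
  apply (erule g3)
  apply (erule g4)
  apply (erule g5)
  apply (erule g6)
  apply (erule g7)
  done

theorem mainTheorem7:
  fixes n :: nat
  assumes "n \<ge> 2"
  shows "(\<forall>u. (\<forall>(x, b) \<in> set u. pgen_ok n x) \<longrightarrow> vsg_perm (wsubst fusing u) = id)
       \<and> (\<forall>w. (\<forall>(x, b) \<in> set w. vgen_ok n x) \<and> vsg_perm w = id \<longrightarrow>
            (\<exists>u. (\<forall>(x, b) \<in> set u. pgen_ok n x) \<and> word_eq (vsg_rels n) (wsubst fusing u) w))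
       \<and> (\<forall>u1 u2. (\<forall>(x, b) \<in> set u1. pgen_ok n x) \<and> (\<forall>(x, b) \<in> set u2. pgen_ok n x) \<longrightarrow>
            (word_eq (vsg_rels n) (wsubst fusing u1) (wsubst fusing u2)
             \<longleftrightarrow> word_eq (vspg_rels n) u1 u2))"
proof (intro conjI allI impI)
  fix u :: "pgen word"
  show "vsg_perm (wsubst fusing u) = id" by (rule part1)
next
  fix w :: "vgen word"
  assume "(\<forall>(x, b) \<in> set w. vgen_ok n x) \<and> vsg_perm w = id"
  then show "\<exists>u. (\<forall>(x, b) \<in> set u. pgen_ok n x) \<and> word_eq (vsg_rels n) (wsubst fusing u) w"
    by (intro part2) (auto simp: allok_def)
next
  fix u1 u2 :: "pgen word"
  assume h: "(\<forall>(x, b) \<in> set u1. pgen_ok n x) \<and> (\<forall>(x, b) \<in> set u2. pgen_ok n x)"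
  show "word_eq (vsg_rels n) (wsubst fusing u1) (wsubst fusing u2) \<longleftrightarrow> word_eq (vspg_rels n) u1 u2"
  proof
    assume "word_eq (vsg_rels n) (wsubst fusing u1) (wsubst fusing u2)"
    then show "word_eq (vspg_rels n) u1 u2" using h part3_fwd by blast
  next
    assume "word_eq (vspg_rels n) u1 u2"
    then show "word_eq (vsg_rels n) (wsubst fusing u1) (wsubst fusing u2)"
      by (rule weq_wsubst) (rule vspg_to_vsg)
  qed
qed

end
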